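(* (1) The $\mathcal{A}$-algebra $\mathcal{U}^0_{\mathcal{A}}(\mathfrak{sl}_2)$ has $\mathcal{A}$-basis \[ \mathcal{B}=\left\{\begin{bmatrix}K;0\\ t\end{bmatrix}: t\ge 0\right\}\cup\left\{\begin{bmatrix}K;1\\ t\end{bmatrix}: t\ge 1\right\}. \] (2) The elements $F^{(a)}\begin{bmatrix}K;c\\ t\end{bmatrix}E^{(b)}$ for $a,b,t\in\mathbb{N}_0$ and $c\in\{0,\min(1,t)\}$ form an $\mathcal{A}$-basis of $\mathcal{U}_{\mathcal{A}}(\mathfrak{sl}_2)$.
   Context: Let $q$ be an indeterminate and $\mathcal{A}=\mathbb{Z}[q,q^{-1}]$. $\mathcal{U}_q(\mathfrak{sl}_2)$ is the unital associative $\mathbb{Q}(q)$-algebra generated by $E,F,K,K^{-1}$ subject to $KK^{-1}=K^{-1}K=1$, $KEK^{-1}=q^2E$, $KFK^{-1}=q^{-2}F$, $EF-FE=\frac{K-K^{-1}}{q-q^{-1}}$. Let $\{n\}_q=\frac{q^n-q^{-n}}{q-q^{-1}}$, $\{n\}_q!=\{n\}_q\cdots\{1\}_q$, $[K;a]=\frac{q^aK-q^{-a}K^{-1}}{q-q^{-1}}$ for $a\in\mathbb{Z}$, and $\begin{bmatrix}K;c\\ t\end{bmatrix}=\frac{[K;c][K;c-1]\cdots[K;c-t+1]}{\{t\}_q!}$ (equal to $1$ if $t=0$). The divided powers are $E^{(n)}=E^n/\{n\}_q!$, $F^{(n)}=F^n/\{n\}_q!$. Lusztig's integral form $\mathcal{U}_{\mathcal{A}}(\mathfrak{sl}_2)$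 is the $\mathcal{A}$-subalgebra generated by $E^{(n)},F^{(n)}$ ($n\in\mathbb{N}$), $K,K^{-1}$ and $\begin{bmatrix}K;0\\ t\end{bmatrix}$ ($t\in\mathbb{N}$); its Cartan subalgebra $\mathcal{U}^0_{\mathcal{A}}(\mathfrak{sl}_2)$ is the $\mathcal{A}$-subalgebra generated by $K,K^{-1}$ and $\begin{bmatrix}K;0\\ t\end{bmatrix}$ ($t\in\mathbb{N}$). *)

theory Defs
  imports "HOL-Library.Poly_Mapping" "HOL-Computational_Algebra.Fraction_Field"
    "HOL-Computational_Algebra.Polynomial"
begin

type_synonym qf = "rat poly fract"   (* the field Q(q) of rational functions *)

definition qq :: qf where "qq = Fraction_Field.Fract [:0, 1:] 1"

definition Laurent :: "qf set" where  (* A = Z[q,q^-1] inside Q(q) *)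
  "Laurent = {Fraction_Field.Fract (map_poly of_int p) 1 * qq powi n | (p :: int poly) (n :: int). True}"

definition qint :: "int \<Rightarrow> qf" where
  "qint n = (qq powi n - qq powi (-n)) / (qq - inverse qq)"

definition qfact :: "nat \<Rightarrow> qf" where
  "qfact n = (\<Prod>i\<in>{1..n}. qint (int i))"

datatype gen = GE | GF | GK | GKi

datatype word = Word "gen list"

instantiation word :: monoid_add
begin
definition zero_word :: word where "zero_word = Word []"
fun plus_word :: "word \<Rightarrow> word \<Rightarrow> word" where
  "plus_word (Word xs) (Word ys) = Word (xs @ ys)"
instance
proof
  fix a b c :: word
  show "a + b + c = a + (b + c)" by (cases a; cases b; cases c) auto
  show "0 + a = a" by (cases a) (auto simp: zero_word_def)
  show "a + 0 = a" by (cases a) (auto simp: zero_word_def)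
qed
end

(* noncommutative polynomials: finitely supported Q(q)-combinations of words,
   multiplication = concatenation, extended bilinearly *)
type_synonym falg = "word \<Rightarrow>\<^sub>0 qf"

definition gen_el :: "gen \<Rightarrow> falg" where "gen_el g = Poly_Mapping.single (Word [g]) 1"

abbreviation "E \<equiv> gen_el GE"
abbreviation "F \<equiv> gen_el GF"
abbreviation "K \<equiv> gen_el GK"
abbreviation "Ki \<equiv> gen_el GKi"

definition scal :: "qf \<Rightarrow> falg \<Rightarrow> falg" where
  "scal c x = Poly_Mapping.single 0 c * x"

definition rels :: "falg set" where
  "rels = { K * Ki - 1, Ki * K - 1,
            K * E * Ki - scal (qq ^ 2) E,
            K * F * Ki - scal (inverse (qq ^ 2)) F,
            E * F - F * E - scal (inverse (qq - inverse qq)) (K - Ki) }"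

inductive_set relideal :: "falg set" where
  zero: "0 \<in> relideal"
| gen: "r \<in> rels \<Longrightarrow> a * r * b \<in> relideal"
| add: "x \<in> relideal \<Longrightarrow> y \<in> relideal \<Longrightarrow> x + y \<in> relideal"

text \<open>U_q(sl_2) is falg modulo relideal; x and y represent the same element of
  U_q(sl_2) iff x - y is in relideal.\<close>

definition Kbr :: "int \<Rightarrow> falg" where
  "Kbr a = scal (inverse (qq - inverse qq)) (scal (qq powi a) K - scal (qq powi (-a)) Ki)"

definition Kbin :: "int \<Rightarrow> nat \<Rightarrow> falg" where
  "Kbin c t = scal (inverse (qfact t)) (prod_list (map (\<lambda>i. Kbr (c - int i)) [0..<t]))"

definition Ediv :: "nat \<Rightarrow> falg" where "Ediv n = scal (inverse (qfact n)) (E ^ n)"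
definition Fdiv :: "nat \<Rightarrow> falg" where "Fdiv n = scal (inverse (qfact n)) (F ^ n)"

inductive_set Asubalg :: "falg set \<Rightarrow> falg set" for G where
  one: "1 \<in> Asubalg G"
| gen: "g \<in> G \<Longrightarrow> g \<in> Asubalg G"
| add: "x \<in> Asubalg G \<Longrightarrow> y \<in> Asubalg G \<Longrightarrow> x + y \<in> Asubalg G"
| mult: "x \<in> Asubalg G \<Longrightarrow> y \<in> Asubalg G \<Longrightarrow> x * y \<in> Asubalg G"
| smult: "a \<in> Laurent \<Longrightarrow> x \<in> Asubalg G \<Longrightarrow> scal a x \<in> Asubalg G"

definition in_Asubalg :: "falg set \<Rightarrow> falg \<Rightarrow> bool" where
  "in_Asubalg G x \<longleftrightarrow> (\<exists>y\<in>Asubalg G. x - y \<in> relideal)"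

definition is_A_basis :: "(falg \<Rightarrow> bool) \<Rightarrow> 'i set \<Rightarrow> ('i \<Rightarrow> falg) \<Rightarrow> bool" where
  "is_A_basis M J b \<longleftrightarrow>
     (\<forall>j\<in>J. M (b j)) \<and>
     (\<forall>S c. finite S \<longrightarrow> S \<subseteq> J \<longrightarrow> (\<forall>j\<in>S. c j \<in> Laurent) \<longrightarrow>
        (\<Sum>j\<in>S. scal (c j) (b j)) \<in> relideal \<longrightarrow> (\<forall>j\<in>S. c j = 0)) \<and>
     (\<forall>x. M x \<longrightarrow> (\<exists>S c. finite S \<and> S \<subseteq> J \<and> (\<forall>j\<in>S. c j \<in> Laurent) \<and>
        x - (\<Sum>j\<in>S. scal (c j) (b j)) \<in> relideal))"

definition U0A_gens :: "falg set" where
  "U0A_gens = {K, Ki} \<union> range (Kbin 0)"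

definition UA_gens :: "falg set" where
  "UA_gens = range Ediv \<union> range Fdiv \<union> {K, Ki} \<union> range (Kbin 0)"

end

theory Submission
  imports Defs
begin


definition Zpoly :: "rat poly \<Rightarrow> bool" where
  "Zpoly p \<longleftrightarrow> (\<forall>i. coeff p i \<in> \<int>)"

lemma Zpoly_map: "Zpoly (map_poly of_int p)"
  unfolding Zpoly_def by (simp add: coeff_map_poly)

lemma Zpoly_inv: assumes "Zpoly r" shows "\<exists>p. r = map_poly of_int p"
proof -
  have "r = map_poly of_int (map_poly floor r)"
    by (rule poly_eqI) (use assms in \<open>auto simp: Zpoly_def coeff_map_poly elim!: Ints_cases\<close>)
  then show ?thesis by blast
qed

lemma Zpoly_add: "Zpoly p \<Longrightarrow> Zpoly q \<Longrightarrow> Zpoly (p + q)"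
  unfolding Zpoly_def by (simp add: Ints_add)

lemma Zpoly_minus: "Zpoly p \<Longrightarrow> Zpoly (- p)"
  unfolding Zpoly_def by (simp add: Ints_minus)

lemma Zpoly_mult: "Zpoly p \<Longrightarrow> Zpoly q \<Longrightarrow> Zpoly (p * q)"
  unfolding Zpoly_def coeff_mult by (auto intro!: Ints_sum Ints_mult)

lemma Zpoly_const: "Zpoly [:of_int z:]"
  unfolding Zpoly_def by (simp add: coeff_pCons split: nat.split)

lemma Zpoly_X: "Zpoly [:0, 1:]"
  unfolding Zpoly_def by (simp add: coeff_pCons split: nat.split)

lemma Zpoly_power: "Zpoly p \<Longrightarrow> Zpoly (p ^ n)"
proof (induction n)
  case 0 show ?case by (simp add: Zpoly_def coeff_1)
next
  case (Suc n) then show ?case by (simp add: Zpoly_mult)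
qed

lemma Laurent_iff: "x \<in> Laurent \<longleftrightarrow> (\<exists>r n. Zpoly r \<and> x = Fraction_Field.Fract r 1 * qq powi n)"
  unfolding Laurent_def using Zpoly_inv Zpoly_map by blast

lemma qq_power: "qq ^ n = Fraction_Field.Fract ([:0,1:] ^ n) 1"
  by (induction n) (auto simp: qq_def One_fract_def)

lemma qq_nz [simp]: "qq \<noteq> 0"
  by (simp add: qq_def Zero_fract_def eq_fract)

lemma qq_power_neq1: assumes "n > 0" shows "qq ^ n \<noteq> 1"
proof
  assume "qq ^ n = 1"
  then have "([:0,1:] :: rat poly) ^ n = 1"
    by (simp add: qq_power One_fract_def eq_fract)
  then have "degree (([:0,1:] :: rat poly) ^ n) = 0" by simp
  moreover have "degree (([:0,1:] :: rat poly) ^ n) = n"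
    by (simp add: degree_power_eq)
  ultimately show False using assms by simp
qed

lemma qq_powi_eq1: "qq powi n = 1 \<longleftrightarrow> n = 0"
proof
  assume h: "qq powi n = 1"
  show "n = 0"
  proof (cases "n \<ge> 0")
    case True
    then obtain k where "n = int k" by (metis nonneg_eq_int)
    with h qq_power_neq1[of k] show ?thesis by (cases "k = 0") auto
  next
    case False
    then obtain k where k: "n = - int k" "k > 0"
      by (metis add.inverse_inverse neg_0_less_iff_less not_le of_nat_0_less_iff zero_less_imp_eq_int)
    with h have "inverse (qq ^ k) = 1" by (simp add: power_int_minus)
    then have "qq ^ k = 1" by (metis inverse_1 inverse_inverse_eq)
    with qq_power_neq1[OF k(2)] show ?thesis by simp
  qed
qed simp

abbreviation Q :: "int \<Rightarrow> qf" where "Q n \<equiv> qq powi n"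

lemma Q_nz [simp]: "Q n \<noteq> 0" by simp

lemma Q_add: "Q (a + b) = Q a * Q b" by (simp add: power_int_add)
lemma Q_diff: "Q (a - b) = Q a / Q b" by (simp add: power_int_diff)
lemma Q_minus: "Q (- a) = inverse (Q a)" by (simp add: power_int_minus)

lemma Q_inj: "Q a = Q b \<longleftrightarrow> a = b"
proof
  assume "Q a = Q b"
  then have "Q (a - b) = 1" by (simp add: Q_diff)
  then show "a = b" using qq_powi_eq1 by simp
qed simp

definition dq :: qf where "dq = qq - inverse qq"

lemma dq_nz [simp]: "dq \<noteq> 0"
proof
  assume "dq = 0"
  then have "qq = inverse qq" by (simp add: dq_def)
  then have "qq * qq = 1" by (metis qq_nz right_inverse)
  then have "qq ^ 2 = 1" by (simp add: power2_eq_square)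
  then show False using qq_power_neq1[of 2] by simp
qed

lemma dq_Q: "dq = Q 1 - Q (-1)" by (simp add: dq_def power_int_minus)

lemma qint_def2: "qint n = (Q n - Q (- n)) / dq"
  by (simp add: qint_def dq_def)

lemma qq_neq_inv [simp]: "qq \<noteq> inverse qq" using dq_nz unfolding dq_def by simp
lemma qint_0 [simp]: "qint 0 = 0" by (simp add: qint_def)
lemma qint_1 [simp]: "qint 1 = 1" by (simp add: qint_def2 dq_Q)

lemma qint_uminus: "qint (- n) = - qint n" unfolding qint_def2 by (simp add: diff_divide_distrib)

lemma qint_add: "qint (a + b) = Q (- b) * qint a + Q a * qint b"
  by (simp add: qint_def2 Q_add Q_diff Q_minus field_simps)

lemma qint_nz: "n \<noteq> 0 \<Longrightarrow> qint n \<noteq> 0"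
proof
  assume "n \<noteq> 0" "qint n = 0"
  then have "Q n = Q (- n)" by (simp add: qint_def2)
  then show False using \<open>n \<noteq> 0\<close> Q_inj by simp
qed


lemma Laurent_mult: assumes "x \<in> Laurent" "y \<in> Laurent" shows "x * y \<in> Laurent"
proof -
  from assms obtain r n s m where "Zpoly r" "x = Fraction_Field.Fract r 1 * Q n" "Zpoly s" "y = Fraction_Field.Fract s 1 * Q m"
    unfolding Laurent_iff by blast
  then have "x * y = Fraction_Field.Fract (r * s) 1 * Q (n + m)" "Zpoly (r * s)"
    by (simp_all add: Q_add Zpoly_mult mult_ac)
  then show ?thesis unfolding Laurent_iff by blast
qed

lemma Laurent_add_aux:
  assumes "Zpoly r" "Zpoly s" "n \<le> m"
  shows "Fraction_Field.Fract r 1 * Q n + Fraction_Field.Fract s 1 * Q m \<in> Laurent"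
proof -
  obtain k where k: "m = n + int k" using assms(3) by (intro that[of "nat (m - n)"]) simp
  have eq1: "Fraction_Field.Fract s 1 * Q m = Fraction_Field.Fract (s * [:0,1:]^k) 1 * Q n"
    by (simp add: k Q_add qq_power mult_ac)
  have eq2: "Fraction_Field.Fract (r + s * [:0,1:]^k) 1 = Fraction_Field.Fract r 1 + Fraction_Field.Fract (s * [:0,1:]^k) 1"
    by simp
  have "Fraction_Field.Fract r 1 * Q n + Fraction_Field.Fract s 1 * Q m = Fraction_Field.Fract (r + s * [:0,1:]^k) 1 * Q n"
    unfolding eq1 eq2 by (simp only: distrib_right)
  moreover have "Zpoly (r + s * [:0,1:]^k)"
    using assms by (intro Zpoly_add Zpoly_mult Zpoly_power Zpoly_X)
  ultimately show ?thesis unfolding Laurent_iff by blast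
qed

lemma Laurent_add: assumes "x \<in> Laurent" "y \<in> Laurent" shows "x + y \<in> Laurent"
proof -
  from assms obtain r n s m where "Zpoly r" "x = Fraction_Field.Fract r 1 * Q n" "Zpoly s" "y = Fraction_Field.Fract s 1 * Q m"
    unfolding Laurent_iff by blast
  then show ?thesis using Laurent_add_aux[of r s n m] Laurent_add_aux[of s r m n]
    by (cases "n \<le> m") (auto simp: add.commute)
qed

lemma Laurent_uminus: assumes "x \<in> Laurent" shows "- x \<in> Laurent"
proof -
  from assms obtain r n where "Zpoly r" "x = Fraction_Field.Fract r 1 * Q n"
    unfolding Laurent_iff by blast
  then have "- x = Fraction_Field.Fract (- r) 1 * Q n" "Zpoly (- r)" by (simp_all add: Zpoly_minus minus_fract[symmetric] del: minus_fract)
  then show ?thesis unfolding Laurent_iff by blast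
qed

lemma Laurent_diff: "x \<in> Laurent \<Longrightarrow> y \<in> Laurent \<Longrightarrow> x - y \<in> Laurent"
  using Laurent_add[of x "- y"] Laurent_uminus[of y] by simp

lemma Laurent_Q: "Q n \<in> Laurent"
proof -
  have "Q n = Fraction_Field.Fract [:of_int 1:] 1 * Q n" by (simp add: One_fract_def[symmetric] one_pCons[symmetric])
  then show ?thesis unfolding Laurent_iff using Zpoly_const by blast
qed

lemma Laurent_one: "1 \<in> Laurent" using Laurent_Q[of 0] by simp

lemma Laurent_zero: "0 \<in> Laurent"
  using Laurent_diff[OF Laurent_one Laurent_one] by simp

lemma fract_of_int: "(of_int z :: 'a::idom fract) = Fraction_Field.Fract (of_int z) 1"
  by (induction z rule: int_induct[where k=0]) (simp_all add: One_fract_def Zero_fract_def)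

lemma Laurent_of_int: "of_int z \<in> Laurent"
proof -
  have "(of_int z :: qf) = Fraction_Field.Fract [:of_int z:] 1 * Q 0"
    by (simp add: of_int_poly[symmetric] fract_of_int)
  then show ?thesis unfolding Laurent_iff using Zpoly_const by blast
qed

lemma Laurent_sum: "(\<And>i. i \<in> S \<Longrightarrow> f i \<in> Laurent) \<Longrightarrow> sum f S \<in> Laurent"
  by (induction S rule: infinite_finite_induct) (auto intro: Laurent_add Laurent_zero)

lemma Laurent_prod: "(\<And>i. i \<in> S \<Longrightarrow> f i \<in> Laurent) \<Longrightarrow> prod f S \<in> Laurent"
  by (induction S rule: infinite_finite_induct) (auto intro: Laurent_mult Laurent_one)

lemma Laurent_power: "x \<in> Laurent \<Longrightarrow> x ^ n \<in> Laurent"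
  by (induction n) (auto intro: Laurent_mult Laurent_one)

lemma Laurent_inv_qq [simp]: "inverse qq \<in> Laurent" using Laurent_Q[of "-1"] by (simp add: power_int_minus)
lemma Laurent_qq_pow [simp]: "qq ^ n \<in> Laurent" using Laurent_Q[of "int n"] by simp
lemma Laurent_qq [simp]: "qq \<in> Laurent" using Laurent_Q[of 1] by simp

lemma qint_nat_Laurent: "qint (int n) \<in> Laurent"
proof (induction n)
  case (Suc n)
  have e: "int (Suc n) = int n + 1" by simp
  have "qint (int (Suc n)) = Q (-1) * qint (int n) + Q (int n) * qint 1"
    unfolding e by (rule qint_add)
  then show ?case using Suc by (auto intro!: Laurent_add Laurent_mult Laurent_Q Laurent_one)
qed (simp add: Laurent_zero)

lemma qint_Laurent: "qint n \<in> Laurent"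
proof (cases "n \<ge> 0")
  case True then show ?thesis using qint_nat_Laurent by (metis nonneg_eq_int)
next
  case False
  then obtain k where "n = - int k" by (intro that[of "nat (- n)"]) simp
  then show ?thesis using Laurent_uminus[OF qint_nat_Laurent[of k]] by (simp only: qint_uminus)
qed

lemma qfact_0 [simp]: "qfact 0 = 1" by (simp add: qfact_def)
lemma qfact_Suc: "qfact (Suc n) = qfact n * qint (int (Suc n))"
  by (simp add: qfact_def prod.nat_ivl_Suc' mult.commute)

lemma qfact_nz [simp]: "qfact n \<noteq> 0"
  by (induction n) (auto simp: qfact_Suc qint_nz)

definition qbin :: "nat \<Rightarrow> nat \<Rightarrow> qf" where
  "qbin n k = qfact n / (qfact k * qfact (n - k))"

lemma qbin_pascal:
  assumes "1 \<le> k" "k \<le> n"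
  shows "qbin (Suc n) k = Q (- int (Suc n - k)) * qbin n (k - 1) + Q (int k) * qbin n k"
proof -
  obtain k' where k': "k = Suc k'" using assms by (cases k) auto
  obtain m where m: "n = k + m" using assms by (metis le_iff_add)
  have e: "int (Suc n) = int k + int (Suc m)" using m by simp
  have split: "qint (int (Suc n)) = Q (- int (Suc m)) * qint (int k) + Q (int k) * qint (int (Suc m))"
    unfolding e by (rule qint_add)
  have e1: "Suc n - k = Suc m" "n - k = m" "n - (k - 1) = Suc m" using m k' by auto
  show ?thesis
    unfolding qbin_def e1 using split
    by (simp add: qfact_Suc k' m field_simps qint_nz del: of_nat_Suc)

qed

lemma qbin_Laurent: "k \<le> n \<Longrightarrow> qbin n k \<in> Laurent"
proof (induction n arbitrary: k)
  case 0 then show ?case by (simp add: qbin_def Laurent_one)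
next
  case (Suc n)
  show ?case
  proof (cases "k = 0 \<or> k = Suc n")
    case True then show ?thesis by (auto simp: qbin_def Laurent_one)
  next
    case False
    then have "1 \<le> k" "k \<le> n" using Suc.prems by auto
    then show ?thesis using Suc.IH[of "k - 1"] Suc.IH[of k]
      by (simp only: qbin_pascal) (intro Laurent_add Laurent_mult Laurent_Q; simp)
  qed
qed

lemma qfact_ratio_Laurent: "qfact (a + b) / (qfact a * qfact b) \<in> Laurent"
  using qbin_Laurent[of a "a + b"] by (simp add: qbin_def)



abbreviation lk where "lk \<equiv> Poly_Mapping.lookup"
abbreviation ks where "ks \<equiv> Poly_Mapping.keys"


lemma pm_sum_singles: "(f :: 'a \<Rightarrow>\<^sub>0 'b::comm_monoid_add) = (\<Sum>k\<in>ks f. Poly_Mapping.single k (lk f k))"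
proof (rule poly_mapping_eqI)
  fix w
  have "lk (\<Sum>k\<in>ks f. Poly_Mapping.single k (lk f k)) w = (\<Sum>k\<in>ks f. if k = w then lk f k else 0)"
    by (simp only: Poly_Mapping.lookup_sum Poly_Mapping.lookup_single when_def)
  also have "\<dots> = lk f w"
    by (simp add: sum.delta' in_keys_iff)
  finally show "lk f w = lk (\<Sum>k\<in>ks f. Poly_Mapping.single k (lk f k)) w" by simp
qed

lemma pm_induct [case_names zero single]:
  fixes f :: "'a \<Rightarrow>\<^sub>0 'b::comm_monoid_add"
  assumes "P 0" "\<And>k c g. P g \<Longrightarrow> P (Poly_Mapping.single k c + g)"
  shows "P f"
proof -
  have "P (\<Sum>k\<in>S. Poly_Mapping.single k (lk f k))" if "finite S" for S
    using that by (induction S rule: finite_induct) (auto intro: assms)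
  then show ?thesis using pm_sum_singles[of f] by (metis finite_keys)
qed

lemma single0_comm: "Poly_Mapping.single 0 c * (x :: falg) = x * Poly_Mapping.single 0 c"
proof (induction x rule: pm_induct)
  case zero then show ?case by simp
next
  case (single k d g)
  have "Poly_Mapping.single 0 c * Poly_Mapping.single k d = Poly_Mapping.single k d * (Poly_Mapping.single 0 c :: falg)"
    by (simp add: mult_single mult.commute)
  then show ?case using single by (simp add: distrib_left distrib_right)
qed

lemma scal_mult_left: "scal c x * y = scal c (x * y)"
  by (simp add: scal_def mult.assoc)

lemma scal_mult_right: "x * scal c y = scal c (x * y)"
  by (simp only: scal_def mult.assoc[symmetric] single0_comm[of c x, symmetric])

lemma scal_scal: "scal c (scal d x) = scal (c * d) x"
  by (simp add: scal_def mult.assoc[symmetric] mult_single)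

lemma scal_add_right: "scal c (x + y) = scal c x + scal c y"
  by (simp add: scal_def distrib_left)

lemma scal_add_left: "scal (c + d) x = scal c x + scal d x"
  by (simp add: scal_def single_add distrib_right)

lemma scal_one [simp]: "scal 1 x = x"
  by (simp add: scal_def)

lemma scal_zero_left [simp]: "scal 0 x = 0"
  by (simp add: scal_def)

lemma scal_zero_right [simp]: "scal c 0 = 0"
  by (simp add: scal_def)

lemma scal_minus_left: "scal (- c) x = - scal c x"
  by (simp add: scal_def single_uminus)

lemma scal_minus_right: "scal c (- x) = - scal c x"
  by (simp add: scal_def)

lemma scal_diff_right: "scal c (x - y) = scal c x - scal c y"
  by (simp add: scal_def right_diff_distrib)

lemma scal_diff_left: "scal (c - d) x = scal c x - scal d x"
  by (simp add: scal_def single_diff left_diff_distrib)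

lemma scal_sum_right: "scal c (sum f S) = (\<Sum>i\<in>S. scal c (f i))"
  by (simp add: scal_def sum_distrib_left)

lemma scal_sum_left: "scal (sum f S) x = (\<Sum>i\<in>S. scal (f i) x)"
  by (induction S rule: infinite_finite_induct) (auto simp: scal_add_left)

lemma scal_1: "scal c 1 = Poly_Mapping.single 0 c"
  by (simp add: scal_def)

lemma neg_scal: "- x = scal (-1) (x :: falg)"
  by (simp add: scal_minus_left)

lemma ri_left: "x \<in> relideal \<Longrightarrow> c * x \<in> relideal"
proof (induction rule: relideal.induct)
  case zero then show ?case by (simp add: relideal.zero)
next
  case (gen r a b) then show ?case using relideal.gen[of r "c * a" b] by (simp add: mult.assoc)
next
  case (add x y) then show ?case by (simp add: distrib_left relideal.add)
qed

lemma ri_right: "x \<in> relideal \<Longrightarrow> x * c \<in> relideal"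
proof (induction rule: relideal.induct)
  case zero then show ?case by (simp add: relideal.zero)
next
  case (gen r a b) then show ?case using relideal.gen[of r a "b * c"] by (simp add: mult.assoc)
next
  case (add x y) then show ?case by (simp add: distrib_right relideal.add)
qed

lemma ri_scal: "x \<in> relideal \<Longrightarrow> scal c x \<in> relideal"
  unfolding scal_def by (rule ri_left)

lemma ri_uminus: "x \<in> relideal \<Longrightarrow> - x \<in> relideal"
  using ri_scal[of x "-1"] by (simp add: scal_minus_left)

lemma ri_diff: "x \<in> relideal \<Longrightarrow> y \<in> relideal \<Longrightarrow> x - y \<in> relideal"
  using relideal.add[of x "- y"] ri_uminus[of y] by simp

lemma ri_sum: "(\<And>i. i \<in> S \<Longrightarrow> f i \<in> relideal) \<Longrightarrow> sum f S \<in> relideal"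
  by (induction S rule: infinite_finite_induct) (auto intro: relideal.zero relideal.add)

lemma ri_rel: "r \<in> rels \<Longrightarrow> r \<in> relideal"
  using relideal.gen[of r 1 1] by simp

definition cg :: "falg \<Rightarrow> falg \<Rightarrow> bool" where
  "cg x y \<longleftrightarrow> x - y \<in> relideal"

lemma cg_refl [simp]: "cg x x" by (simp add: cg_def relideal.zero)

lemma cg_eq: "x = y \<Longrightarrow> cg x y" by simp

lemma cg_sym: "cg x y \<Longrightarrow> cg y x"
  unfolding cg_def using ri_uminus by fastforce

lemma cg_trans [trans]: "cg x y \<Longrightarrow> cg y z \<Longrightarrow> cg x z"
  unfolding cg_def using relideal.add by fastforce

lemma cg_add: "cg a b \<Longrightarrow> cg c d \<Longrightarrow> cg (a + c) (b + d)"
  unfolding cg_def using relideal.add by (fastforce simp: algebra_simps)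

lemma cg_uminus: "cg a b \<Longrightarrow> cg (- a) (- b)"
  unfolding cg_def using ri_uminus by (fastforce simp: algebra_simps)

lemma cg_diff: "cg a b \<Longrightarrow> cg c d \<Longrightarrow> cg (a - c) (b - d)"
  using cg_add[of a b "- c" "- d"] cg_uminus by simp

lemma cg_mult_left: "cg a b \<Longrightarrow> cg (c * a) (c * b)"
  unfolding cg_def using ri_left by (fastforce simp: right_diff_distrib[symmetric])

lemma cg_mult_right: "cg a b \<Longrightarrow> cg (a * c) (b * c)"
  unfolding cg_def using ri_right by (fastforce simp: left_diff_distrib[symmetric])

lemma cg_mult: "cg a b \<Longrightarrow> cg c d \<Longrightarrow> cg (a * c) (b * d)"
  using cg_mult_left cg_mult_right cg_trans by blast

lemma cg_scal: "cg a b \<Longrightarrow> cg (scal c a) (scal c b)"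
  unfolding cg_def using ri_scal by (fastforce simp: scal_diff_right[symmetric])

lemma cg_sum: "(\<And>i. i \<in> S \<Longrightarrow> cg (f i) (g i)) \<Longrightarrow> cg (sum f S) (sum g S)"
  by (induction S rule: infinite_finite_induct) (auto intro: cg_add)

lemma cg_ri: "cg x y \<Longrightarrow> y \<in> relideal \<Longrightarrow> x \<in> relideal"
  unfolding cg_def using relideal.add by fastforce

lemma cg_KKi: "cg (K * Ki) 1"
  unfolding cg_def by (rule ri_rel) (simp add: rels_def)

lemma cg_KiK: "cg (Ki * K) 1"
  unfolding cg_def by (rule ri_rel) (simp add: rels_def)

lemma cg_KEKi: "cg (K * E * Ki) (scal (Q 2) E)"
  unfolding cg_def by (rule ri_rel) (simp add: rels_def)

lemma cg_KFKi: "cg (K * F * Ki) (scal (Q (-2)) F)"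
  unfolding cg_def by (rule ri_rel) (simp add: rels_def power_int_minus)

lemma cg_EF: "cg (E * F) (F * E + scal (inverse dq) (K - Ki))"
  unfolding cg_def by (rule ri_rel) (simp add: rels_def dq_def algebra_simps)

lemma cg_KF: "cg (K * F) (scal (Q (-2)) (F * K))"
proof -
  have "cg (K * F) (K * F * (Ki * K))" using cg_mult_left[OF cg_sym[OF cg_KiK], of "K * F"] by simp
  also have "K * F * (Ki * K) = (K * F * Ki) * K" by (simp add: mult.assoc)
  also have "cg \<dots> (scal (Q (-2)) F * K)" by (rule cg_mult_right[OF cg_KFKi])
  finally show ?thesis by (simp add: scal_mult_left)
qed

lemma cg_KE: "cg (K * E) (scal (Q 2) (E * K))"
proof -
  have "cg (K * E) (K * E * (Ki * K))" using cg_mult_left[OF cg_sym[OF cg_KiK], of "K * E"] by simp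
  also have "K * E * (Ki * K) = (K * E * Ki) * K" by (simp add: mult.assoc)
  also have "cg \<dots> (scal (Q 2) E * K)" by (rule cg_mult_right[OF cg_KEKi])
  finally show ?thesis by (simp add: scal_mult_left)
qed

lemma cg_KiF: "cg (Ki * F) (scal (Q 2) (F * Ki))"
proof -
  have "cg (Ki * (K * F) * Ki) (Ki * scal (Q (-2)) (F * K) * Ki)"
    by (intro cg_mult_right cg_mult_left cg_KF)
  moreover have "cg (Ki * (K * F) * Ki) (F * Ki)"
    using cg_mult_right[OF cg_KiK, of "F * Ki"] by (simp add: mult.assoc)
  moreover have "cg (Ki * scal (Q (-2)) (F * K) * Ki) (scal (Q (-2)) (Ki * F))"
    using cg_scal[OF cg_mult_left[OF cg_KKi, of "Ki * F"], of "Q (-2)"]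
    by (simp add: scal_mult_left scal_mult_right mult.assoc)
  ultimately have "cg (F * Ki) (scal (Q (-2)) (Ki * F))"
    using cg_sym cg_trans by blast
  then have "cg (scal (Q 2) (F * Ki)) (scal (Q 2 * Q (-2)) (Ki * F))"
    using cg_scal scal_scal by metis
  moreover have "Q 2 * Q (-2) = 1" by (simp add: power_int_minus)
  ultimately show ?thesis using cg_sym by simp
qed

lemma cg_KiE: "cg (Ki * E) (scal (Q (-2)) (E * Ki))"
proof -
  have "cg (Ki * (K * E) * Ki) (Ki * scal (Q 2) (E * K) * Ki)"
    by (intro cg_mult_right cg_mult_left cg_KE)
  moreover have "cg (Ki * (K * E) * Ki) (E * Ki)"
    using cg_mult_right[OF cg_KiK, of "E * Ki"] by (simp add: mult.assoc)
  moreover have "cg (Ki * scal (Q 2) (E * K) * Ki) (scal (Q 2) (Ki * E))"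
    using cg_scal[OF cg_mult_left[OF cg_KKi, of "Ki * E"], of "Q 2"]
    by (simp add: scal_mult_left scal_mult_right mult.assoc)
  ultimately have "cg (E * Ki) (scal (Q 2) (Ki * E))"
    using cg_sym cg_trans by blast
  then have "cg (scal (Q (-2)) (E * Ki)) (scal (Q (-2) * Q 2) (Ki * E))"
    using cg_scal scal_scal by metis
  moreover have "Q (-2) * Q 2 = 1" by (simp add: power_int_minus)
  ultimately show ?thesis using cg_sym by simp
qed



section \<open>Commutative Laurent polynomials in K\<close>

type_synonym lp = "int \<Rightarrow>\<^sub>0 qf"

definition Lc :: "qf \<Rightarrow> lp" where "Lc c = Poly_Mapping.single 0 c"

abbreviation LX :: lp where "LX \<equiv> Poly_Mapping.single 1 1"
abbreviation LXi :: lp where "LXi \<equiv> Poly_Mapping.single (-1) 1"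

definition kbr :: "int \<Rightarrow> lp" where
  "kbr c = Poly_Mapping.single 1 (Q c / dq) - Poly_Mapping.single (-1) (Q (- c) / dq)"

definition kbin :: "int \<Rightarrow> nat \<Rightarrow> lp" where
  "kbin c t = Lc (inverse (qfact t)) * (\<Prod>i<t. kbr (c - int i))"

lemma lk_Lc_mult [simp]: "lk (Lc a * f) n = a * lk f n"
proof (induction f rule: pm_induct)
  case zero then show ?case by simp
next
  case (single k c g)
  then show ?case by (simp add: Lc_def distrib_left mult_single lookup_add lookup_single when_def algebra_simps)
qed

lemma lk_mult_Lc [simp]: "lk (f * Lc a) n = lk f n * a"
  by (simp add: mult.commute[of f])

lemma lk_mult_single: "lk ((f::lp) * Poly_Mapping.single k c) n = lk f (n - k) * c"
proof (induction f rule: pm_induct)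
  case zero then show ?case by simp
next
  case (single m d g)
  then show ?case by (auto simp: distrib_right mult_single lookup_add lookup_single when_def algebra_simps)
qed

lemma lk_single: "lk (Poly_Mapping.single k c) n = (if k = n then c else 0)"
  by (simp add: lookup_single when_def)

lemma Lc_mult: "Lc a * Lc b = Lc (a * b)" by (simp add: Lc_def mult_single)
lemma Lc_add: "Lc (a + b) = Lc a + Lc b" by (simp add: Lc_def single_add)
lemma Lc_diff: "Lc (a - b) = Lc a - Lc b" by (simp add: Lc_def single_diff)
lemma Lc_uminus: "Lc (- a) = - Lc a" by (simp add: Lc_def single_uminus)
lemma Lc_1 [simp]: "Lc 1 = 1" by (simp add: Lc_def)
lemma Lc_0 [simp]: "Lc 0 = 0" by (simp add: Lc_def)
lemma Lc_sum: "Lc (sum f S) = (\<Sum>i\<in>S. Lc (f i))"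
  by (induction S rule: infinite_finite_induct) (auto simp: Lc_add)

lemma lk_kbr: "lk (kbr c) n = (if n = 1 then Q c / dq else if n = -1 then - (Q (- c) / dq) else 0)"
  by (auto simp: kbr_def lookup_minus lk_single)

lemma lk_LX: "lk LX n = (if n = 1 then 1 else 0)" by (simp add: lk_single)
lemma lk_LXi: "lk LXi n = (if n = -1 then 1 else 0)" by (simp add: lk_single)

lemma LX_LXi: "LX * LXi = 1" by (simp add: mult_single)

lemma kbin_0 [simp]: "kbin c 0 = 1" by (simp add: kbin_def)

lemma kbin_R1: "Lc (qint (int (Suc t))) * kbin c (Suc t) = kbin c t * kbr (c - int t)"
proof -
  have "Lc (qint (int (Suc t))) * kbin c (Suc t)
      = Lc (qint (int (Suc t)) * inverse (qfact (Suc t))) * ((\<Prod>i<t. kbr (c - int i)) * kbr (c - int t))"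
    by (simp add: kbin_def Lc_mult[symmetric] mult.assoc)
  also have "qint (int (Suc t)) * inverse (qfact (Suc t)) = inverse (qfact t)"
    using qint_nz[of "int (Suc t)"] by (simp add: qfact_Suc del: of_nat_Suc)
  finally show ?thesis by (simp add: kbin_def mult.assoc)
qed

lemma kbin_R2: "Lc (qint (int (Suc t))) * kbin c (Suc t) = kbr c * kbin (c - 1) t"
proof -
  have p: "(\<Prod>i<Suc t. kbr (c - int i)) = kbr c * (\<Prod>i<t. kbr (c - 1 - int i))"
    unfolding prod.lessThan_Suc_shift by (simp add: algebra_simps)
  have "Lc (qint (int (Suc t))) * kbin c (Suc t)
      = Lc (qint (int (Suc t)) * inverse (qfact (Suc t))) * (kbr c * (\<Prod>i<t. kbr (c - 1 - int i)))"
    unfolding kbin_def p by (simp only: Lc_mult[symmetric] mult.assoc)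
  also have "qint (int (Suc t)) * inverse (qfact (Suc t)) = inverse (qfact t)"
    using qint_nz[of "int (Suc t)"] by (simp add: qfact_Suc del: of_nat_Suc)
  finally show ?thesis by (simp add: kbin_def mult_ac)
qed

lemma scal_id_L3a: "qint (u + v) * (Q w / dq) = qint u * (Q (w - v) / dq) + qint v * (Q (w + u) / dq)"
  by (simp add: qint_def2 Q_add Q_diff Q_minus field_simps)

lemma scal_id_L3b: "qint (u + v) * (Q (- w) / dq) = qint u * (Q (- (w - v)) / dq) + qint v * (Q (- (w + u)) / dq)"
  by (simp add: qint_def2 Q_add Q_diff Q_minus field_simps)

lemma id_L3: "Lc (qint (u + v)) * kbr w = Lc (qint u) * kbr (w - v) + Lc (qint v) * kbr (w + u)"
proof (rule poly_mapping_eqI)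
  fix n
  show "lk (Lc (qint (u + v)) * kbr w) n = lk (Lc (qint u) * kbr (w - v) + Lc (qint v) * kbr (w + u)) n"
    using scal_id_L3a[of u v w] scal_id_L3b[of u v w]
    by (auto simp: lookup_add lk_kbr)
qed

lemma id_A: "kbr a - Lc (Q (a - b)) * kbr b = Lc (Q (- b) * qint (a - b)) * LXi"
proof (rule poly_mapping_eqI)
  fix n
  have e1: "Q a / dq - Q (a - b) * (Q b / dq) = 0" by (simp add: Q_diff)
  have e2: "- (Q (- a) / dq) + Q (a - b) * (Q (- b) / dq) = Q (- b) * qint (a - b)"
    by (simp add: qint_def2 Q_add Q_diff Q_minus field_simps)
  show "lk (kbr a - Lc (Q (a - b)) * kbr b) n = lk (Lc (Q (- b) * qint (a - b)) * LXi) n"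
    using e1 e2 by (simp add: lookup_minus lk_kbr lk_LXi)
qed

lemma id_B: "kbr a - Lc (Q (b - a)) * kbr b = Lc (Q b * qint (a - b)) * LX"
proof (rule poly_mapping_eqI)
  fix n
  have e1: "Q a / dq - Q (b - a) * (Q b / dq) = Q b * qint (a - b)"
    by (simp add: qint_def2 Q_add Q_diff Q_minus field_simps)
  have e2: "- (Q (- a) / dq) + Q (b - a) * (Q (- b) / dq) = 0" by (simp add: Q_diff Q_minus field_simps)
  show "lk (kbr a - Lc (Q (b - a)) * kbr b) n = lk (Lc (Q b * qint (a - b)) * LX) n"
    using e1 e2 by (simp add: lookup_minus lk_kbr lk_LX)
qed

lemma id_cheb: "kbr (c + 2) = Lc (Q 1 + Q (-1)) * kbr (c + 1) - kbr c"
proof (rule poly_mapping_eqI)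
  fix n
  have e1: "Q (c + 2) / dq = (Q 1 + Q (-1)) * (Q (c + 1) / dq) - Q c / dq"
    by (simp add: Q_add Q_minus field_simps power2_eq_square)
  have e2: "Q (- (c + 2)) / dq = (Q 1 + Q (-1)) * (Q (- (c + 1)) / dq) - Q (- c) / dq"
    by (simp add: Q_add Q_diff Q_minus field_simps power2_eq_square)
  show "lk (kbr (c + 2)) n = lk (Lc (Q 1 + Q (-1)) * kbr (c + 1) - kbr c) n"
    using e1 e2 by (simp add: lookup_minus lk_kbr add_divide_distrib)
qed

lemma kbr_mult: "kbr a * kbr b = Poly_Mapping.single 2 (Q (a + b) / dq^2)
   + Poly_Mapping.single 0 (- (Q (a - b) + Q (b - a)) / dq^2) + Poly_Mapping.single (-2) (Q (- a - b) / dq^2)"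
proof -
  have "kbr a * kbr b = Poly_Mapping.single 2 (Q a / dq * (Q b / dq))
     - Poly_Mapping.single 0 (Q a / dq * (Q (- b) / dq)) - Poly_Mapping.single 0 (Q (- a) / dq * (Q b / dq))
     + Poly_Mapping.single (-2) (Q (- a) / dq * (Q (- b) / dq))"
    by (simp add: kbr_def algebra_simps mult_single)
  also have "\<dots> = Poly_Mapping.single 2 (Q (a + b) / dq^2)
   + Poly_Mapping.single 0 (- (Q (a - b) + Q (b - a)) / dq^2) + Poly_Mapping.single (-2) (Q (- a - b) / dq^2)"
    by (simp add: single_diff[symmetric] single_add[symmetric] Q_add Q_diff Q_minus field_simps power2_eq_square)
  finally show ?thesis .
qed



lemma Lc_nz: "a \<noteq> 0 \<Longrightarrow> Lc a \<noteq> 0"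
  unfolding Lc_def by (metis lookup_single_eq lookup_zero)

lemma lk_Lc: "lk (Lc a) n = (if n = 0 then a else 0)"
  by (simp add: Lc_def lk_single)

lemma Q_double: "Q (2 * x) = Q x * Q x" "Q (x * 2) = Q x * Q x"
  by (simp_all only: mult_2 mult_2_right Q_add)

lemma Lc_cancel: "a \<noteq> 0 \<Longrightarrow> Lc a * x = Lc a * y \<Longrightarrow> x = y"
  using Lc_nz[of a] by simp

lemma quad_coef2: "Q (c + 2 + (c + 1)) / dq^2 - (Q (s + 2) + Q (- (s + 2))) * (Q (c + 1 + (c - s)) / dq^2)
   + Q (c - s + (c - s - 1)) / dq^2 = 0"
  by (simp add: Q_add Q_diff Q_minus Q_double field_simps power2_eq_square power3_eq_cube)

lemma quad_coefm2: "Q (- (c + 2) - (c + 1)) / dq^2 - (Q (s + 2) + Q (- (s + 2))) * (Q (- (c + 1) - (c - s)) / dq^2)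
   + Q (- (c - s) - (c - s - 1)) / dq^2 = 0"
  by (simp add: Q_add Q_diff Q_minus Q_double field_simps power2_eq_square power3_eq_cube)

lemma quad_coef0: "- (Q (c + 2 - (c + 1)) + Q (c + 1 - (c + 2))) / dq^2
   - (Q (s + 2) + Q (- (s + 2))) * (- (Q (c + 1 - (c - s)) + Q (c - s - (c + 1))) / dq^2)
   + - (Q (c - s - (c - s - 1)) + Q (c - s - 1 - (c - s))) / dq^2 = qint (s + 2) * qint (s + 1)"
  by (simp add: qint_def2 Q_add Q_diff Q_minus Q_double field_simps power2_eq_square power3_eq_cube)

lemma id_quad: "kbr (c + 2) * kbr (c + 1) - Lc (Q (s + 2) + Q (- (s + 2))) * (kbr (c + 1) * kbr (c - s))
   + kbr (c - s) * kbr (c - s - 1) = Lc (qint (s + 2) * qint (s + 1))"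
proof (rule poly_mapping_eqI)
  fix n
  show "lk (kbr (c + 2) * kbr (c + 1) - Lc (Q (s + 2) + Q (- (s + 2))) * (kbr (c + 1) * kbr (c - s))
   + kbr (c - s) * kbr (c - s - 1)) n = lk (Lc (qint (s + 2) * qint (s + 1))) n"
    unfolding kbr_mult
    using quad_coef2[of c s] quad_coefm2[of c s] quad_coef0[of c s]
    by (simp only: lookup_add lookup_minus lk_Lc_mult lk_single lk_Lc) auto
qed

lemma kbin_Suc_Suc_first: "(\<Prod>i<Suc (Suc s). kbr (c + 2 - int i)) = kbr (c + 2) * kbr (c + 1) * (\<Prod>i<s. kbr (c - int i))"
  unfolding prod.lessThan_Suc_shift by (simp add: algebra_simps)

lemma prod_Suc_Suc_mid: "(\<Prod>i<Suc (Suc s). g i) = g 0 * (\<Prod>i<s. g (Suc i)) * (g (Suc s) :: lp)"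
  by (simp only: prod.lessThan_Suc_shift[of g "Suc s"] prod.lessThan_Suc[of "\<lambda>i. g (Suc i)" s] mult.assoc)

lemma kbin_Suc_Suc_mid: "(\<Prod>i<Suc (Suc s). kbr (c + 1 - int i)) = kbr (c + 1) * kbr (c - s) * (\<Prod>i<s. kbr (c - int i))"
proof -
  have "(\<Prod>i<Suc (Suc s). kbr (c + 1 - int i)) = kbr (c + 1) * (\<Prod>i<s. kbr (c - int i)) * kbr (c - int s)"
    unfolding prod_Suc_Suc_mid by (simp add: algebra_simps)
  then show ?thesis by (simp add: mult_ac)
qed

lemma kbin_Suc_Suc_last: "(\<Prod>i<Suc (Suc s). kbr (c - int i)) = kbr (c - s) * kbr (c - s - 1) * (\<Prod>i<s. kbr (c - int i))"
  unfolding prod.lessThan_Suc by (simp add: algebra_simps)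

lemma qfact_Suc_Suc: "qfact (Suc (Suc s)) = qfact s * qint (int s + 1) * qint (int s + 2)"
  by (simp add: qfact_Suc add.commute)

lemma id_C2: "kbin (c + 2) (Suc (Suc s)) = Lc (Q (int s + 2) + Q (- (int s + 2))) * kbin (c + 1) (Suc (Suc s))
   - kbin c (Suc (Suc s)) + kbin c s"
proof -
  define P where "P = (\<Prod>i<s. kbr (c - int i))"
  define a where "a = inverse (qfact (Suc (Suc s)))"
  have k1: "kbin (c + 2) (Suc (Suc s)) = Lc a * (kbr (c + 2) * kbr (c + 1) * P)"
    unfolding kbin_def a_def P_def kbin_Suc_Suc_first ..
  have k2: "kbin (c + 1) (Suc (Suc s)) = Lc a * (kbr (c + 1) * kbr (c - s) * P)"
    unfolding kbin_def a_def P_def kbin_Suc_Suc_mid ..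
  have k3: "kbin c (Suc (Suc s)) = Lc a * (kbr (c - s) * kbr (c - s - 1) * P)"
    unfolding kbin_def a_def P_def kbin_Suc_Suc_last ..
  have k4: "kbin c s = Lc (a * (qint (int s + 2) * qint (int s + 1))) * P"
    unfolding kbin_def a_def P_def qfact_Suc_Suc
    using qint_nz[of "int s + 1"] qint_nz[of "int s + 2"] by (simp add: field_simps)
  have q: "kbr (c + 2) * kbr (c + 1) = Lc (Q (int s + 2) + Q (- (int s + 2))) * (kbr (c + 1) * kbr (c - s))
     - kbr (c - s) * kbr (c - s - 1) + Lc (qint (int s + 2) * qint (int s + 1))"
    using id_quad[of c "int s"] by (simp add: algebra_simps)
  show ?thesis unfolding k1 k2 k3 k4 q by (simp add: algebra_simps Lc_mult[symmetric])
qed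

lemma id_C1: "kbin (c + 2) (Suc 0) = Lc (Q 1 + Q (- 1)) * kbin (c + 1) (Suc 0) - kbin c (Suc 0)"
  using id_cheb[of c] by (simp add: kbin_def qfact_Suc algebra_simps)

lemma id_C0: "kbin (c + 2) 0 = Lc (Q 0 + Q (- 0)) * kbin (c + 1) 0 - kbin c 0"
  by (simp add: Lc_def)

lemma id_Xi: "LXi * kbin c t = Lc (Q (c - int t)) * (kbin (c + 1) (Suc t) - Lc (Q (int t + 1)) * kbin c (Suc t))"
proof -
  have a: "kbr (c + 1) - Lc (Q (int t + 1)) * kbr (c - int t) = Lc (Q (int t - c) * qint (int t + 1)) * LXi"
    using id_A[of "c + 1" "c - int t"] by (simp add: algebra_simps)
  have "Lc (qint (int (Suc t))) * (kbin (c + 1) (Suc t) - Lc (Q (int t + 1)) * kbin c (Suc t))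
      = kbr (c + 1) * kbin c t - Lc (Q (int t + 1)) * (kbin c t * kbr (c - int t))"
    using kbin_R2[of t "c + 1"] kbin_R1[of t c] by (simp add: algebra_simps)
  also have "\<dots> = (kbr (c + 1) - Lc (Q (int t + 1)) * kbr (c - int t)) * kbin c t"
    by (simp add: algebra_simps)
  also have "\<dots> = Lc (qint (int (Suc t))) * (Lc (Q (int t - c)) * (LXi * kbin c t))"
    unfolding a by (simp add: Lc_mult[symmetric] mult_ac add.commute)
  finally have "kbin (c + 1) (Suc t) - Lc (Q (int t + 1)) * kbin c (Suc t) = Lc (Q (int t - c)) * (LXi * kbin c t)"
    by (rule Lc_cancel[OF qint_nz, rotated]) simp
  then have "Lc (Q (c - int t)) * (kbin (c + 1) (Suc t) - Lc (Q (int t + 1)) * kbin c (Suc t))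
      = Lc (Q (c - int t) * Q (int t - c)) * (LXi * kbin c t)"
    by (simp add: Lc_mult[symmetric] mult.assoc)
  also have "Q (c - int t) * Q (int t - c) = 1" by (simp add: Q_add[symmetric])
  finally show ?thesis by simp
qed

lemma id_X: "LX * kbin c t = Lc (Q (int t - c)) * (kbin (c + 1) (Suc t) - Lc (Q (- (int t + 1))) * kbin c (Suc t))"
proof -
  have a: "kbr (c + 1) - Lc (Q (- (int t + 1))) * kbr (c - int t) = Lc (Q (c - int t) * qint (int t + 1)) * LX"
    using id_B[of "c + 1" "c - int t"] by (simp add: algebra_simps)
  have "Lc (qint (int (Suc t))) * (kbin (c + 1) (Suc t) - Lc (Q (- (int t + 1))) * kbin c (Suc t))
      = kbr (c + 1) * kbin c t - Lc (Q (- (int t + 1))) * (kbin c t * kbr (c - int t))"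
    using kbin_R2[of t "c + 1"] kbin_R1[of t c] by (simp add: algebra_simps)
  also have "\<dots> = (kbr (c + 1) - Lc (Q (- (int t + 1))) * kbr (c - int t)) * kbin c t"
    by (simp add: algebra_simps)
  also have "\<dots> = Lc (qint (int (Suc t))) * (Lc (Q (c - int t)) * (LX * kbin c t))"
    unfolding a by (simp add: Lc_mult[symmetric] mult_ac add.commute)
  finally have "kbin (c + 1) (Suc t) - Lc (Q (- (int t + 1))) * kbin c (Suc t) = Lc (Q (c - int t)) * (LX * kbin c t)"
    by (rule Lc_cancel[OF qint_nz, rotated]) simp
  then have "Lc (Q (int t - c)) * (kbin (c + 1) (Suc t) - Lc (Q (- (int t + 1))) * kbin c (Suc t))
      = Lc (Q (int t - c) * Q (c - int t)) * (LX * kbin c t)"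
    by (simp add: Lc_mult[symmetric] mult.assoc)
  also have "Q (int t - c) * Q (c - int t) = 1" by (simp add: Q_add[symmetric])
  finally show ?thesis by simp
qed

lemma id_E: "Lc (qint N) * kbin (c + 1) (Suc t)
   = Lc (qint (N - int (Suc t))) * kbin c (Suc t) + kbr (c + N - int t) * kbin c t"
proof -
  have l3: "Lc (qint N) * kbr (c + 1) = Lc (qint (N - int (Suc t))) * kbr (c - int t) + Lc (qint (int (Suc t))) * kbr (c + N - int t)"
    using id_L3[of "N - int (Suc t)" "int (Suc t)" "c + 1"] by (simp add: algebra_simps)
  have "Lc (qint (int (Suc t))) * (Lc (qint N) * kbin (c + 1) (Suc t))
      = Lc (qint N) * kbr (c + 1) * kbin c t"
    using kbin_R2[of t "c + 1"] by (simp add: mult_ac)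
  also have "\<dots> = Lc (qint (N - int (Suc t))) * (kbin c t * kbr (c - int t)) + Lc (qint (int (Suc t))) * (kbr (c + N - int t) * kbin c t)"
    unfolding l3 by (simp add: algebra_simps)
  also have "\<dots> = Lc (qint (int (Suc t))) * (Lc (qint (N - int (Suc t))) * kbin c (Suc t) + kbr (c + N - int t) * kbin c t)"
    using kbin_R1[of t c] by (simp add: algebra_simps)
  finally show ?thesis
    by (rule Lc_cancel[OF qint_nz, rotated]) simp
qed

lemma id_L2: "Lc (qint (a + 1)) * kbr (- a) = Lc (qint a) * kbr (- a - 1) + kbr 0"
  using id_L3[of a 1 "- a"] by simp

lemma prod_split: "(\<Prod>i<t + s. kbr (c - int i)) = (\<Prod>i<t. kbr (c - int i)) * (\<Prod>i<s. kbr (c - int t - int i))"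
  by (induction s) (simp_all add: mult_ac algebra_simps)

lemma kbin_prod: "kbin c t * kbin (c - int t) s = Lc (qfact (t + s) / (qfact t * qfact s)) * kbin c (t + s)"
proof -
  have sc: "inverse (qfact t) * inverse (qfact s) = qfact (t + s) / (qfact t * qfact s) * inverse (qfact (t + s))"
    by (simp add: field_simps)
  have "kbin c t * kbin (c - int t) s = Lc (inverse (qfact t) * inverse (qfact s))
     * ((\<Prod>i<t. kbr (c - int i)) * (\<Prod>i<s. kbr (c - int t - int i)))"
    unfolding kbin_def by (simp only: Lc_mult[symmetric] mult_ac)
  also have "\<dots> = Lc (qfact (t + s) / (qfact t * qfact s)) * kbin c (t + s)"
    unfolding sc kbin_def prod_split by (simp only: Lc_mult[symmetric] mult_ac)
  finally show ?thesis .
qed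

definition sig :: "lp \<Rightarrow> lp" where
  "sig f = Poly_Mapping.mapp (\<lambda>n c. Q (-2 * n) * c) f"

lemma lk_sig: "lk (sig f) n = Q (-2 * n) * lk f n"
  by (auto simp: sig_def lookup_mapp when_def in_keys_iff)

lemma sig_add: "sig (f + g) = sig f + sig g"
  by (rule poly_mapping_eqI) (simp add: lk_sig lookup_add algebra_simps)

lemma sig_diff: "sig (f - g) = sig f - sig g"
  by (rule poly_mapping_eqI) (simp add: lk_sig lookup_minus algebra_simps)

lemma sig_0 [simp]: "sig 0 = 0"
  by (rule poly_mapping_eqI) (simp add: lk_sig)

lemma sig_single: "sig (Poly_Mapping.single k c) = Poly_Mapping.single k (Q (-2 * k) * c)"
  by (rule poly_mapping_eqI) (simp add: lk_sig lk_single)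

lemma sig_mult: "sig (f * g) = sig f * sig g"
proof (induction f rule: pm_induct)
  case zero then show ?case by simp
next
  case (single k c f)
  have "sig (Poly_Mapping.single k c * g) = sig (Poly_Mapping.single k c) * sig g"
  proof (induction g rule: pm_induct)
    case zero then show ?case by simp
  next
    case (single l d g)
    then show ?case
      by (simp add: distrib_left sig_add mult_single sig_single Q_add[symmetric] algebra_simps)
  qed
  then show ?case using single by (simp add: distrib_right sig_add)
qed

lemma sig_Lc [simp]: "sig (Lc a) = Lc a"
  by (simp add: Lc_def sig_single)

lemma sig_1 [simp]: "sig 1 = 1"
  using sig_Lc[of 1] by simp

lemma sig_prod: "sig (prod f S) = (\<Prod>i\<in>S. sig (f i))"
  by (induction S rule: infinite_finite_induct) (auto simp: sig_mult)

lemma sig_kbr: "sig (kbr c) = kbr (c - 2)"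
  by (rule poly_mapping_eqI) (auto simp: lk_sig lk_kbr Q_add[symmetric] Q_diff Q_minus field_simps)

lemma sig_kbin: "sig (kbin c t) = kbin (c - 2) t"
  by (simp add: kbin_def sig_mult sig_prod sig_kbr algebra_simps)

lemma sig_pow_kbin: "(sig ^^ m) (kbin c t) = kbin (c - 2 * int m) t"
  by (induction m) (simp_all add: sig_kbin algebra_simps)

lemma sig_LX: "sig LX = Lc (Q (-2)) * LX"
  by (simp add: sig_single Lc_def mult_single)

lemma sig_LXi: "sig LXi = Lc (Q 2) * LXi"
  by (simp add: sig_single Lc_def mult_single)

lemma sig_Lc_mult: "sig (Lc a * f) = Lc a * sig f"
  by (simp add: sig_mult)



section \<open>The map psi from Laurent polynomials to the free algebra\<close>

definition Kp :: "int \<Rightarrow> falg" where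
  "Kp n = (if n \<ge> 0 then K ^ nat n else Ki ^ nat (- n))"

definition psi :: "lp \<Rightarrow> falg" where
  "psi f = (\<Sum>n\<in>ks f. scal (lk f n) (Kp n))"

lemma psi_superset: "finite S \<Longrightarrow> ks f \<subseteq> S \<Longrightarrow> psi f = (\<Sum>n\<in>S. scal (lk f n) (Kp n))"
  unfolding psi_def by (rule sum.mono_neutral_left) (auto simp: in_keys_iff)

lemma psi_add: "psi (f + g) = psi f + psi g"
proof -
  let ?S = "ks f \<union> ks g"
  have "ks (f + g) \<subseteq> ?S" by (rule keys_add)
  then have "psi (f + g) = (\<Sum>n\<in>?S. scal (lk (f + g) n) (Kp n))" by (intro psi_superset) auto
  also have "\<dots> = (\<Sum>n\<in>?S. scal (lk f n) (Kp n)) + (\<Sum>n\<in>?S. scal (lk g n) (Kp n))"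
    by (simp add: lookup_add scal_add_left sum.distrib)
  also have "\<dots> = psi f + psi g" by (subst (1 2) psi_superset[of ?S]) auto
  finally show ?thesis .
qed

lemma psi_0 [simp]: "psi 0 = 0" by (simp add: psi_def)

lemma psi_uminus: "psi (- f) = - psi f"
proof -
  have "psi f + psi (- f) = 0" using psi_add[of f "- f"] by simp
  then show ?thesis by (rule minus_unique[symmetric])
qed

lemma psi_diff: "psi (f - g) = psi f - psi g"
  using psi_add[of f "- g"] psi_uminus[of g] by simp

lemma psi_sum: "psi (sum f S) = (\<Sum>i\<in>S. psi (f i))"
  by (induction S rule: infinite_finite_induct) (auto simp: psi_add)

lemma psi_single: "psi (Poly_Mapping.single k c) = scal c (Kp k)"
  by (subst psi_superset[of "{k}"]) (auto simp: lk_single)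

lemma psi_Lc_mult: "psi (Lc a * f) = scal a (psi f)"
proof -
  have "ks (Lc a * f) \<subseteq> ks f" by (auto simp: in_keys_iff)
  then have "psi (Lc a * f) = (\<Sum>n\<in>ks f. scal (lk (Lc a * f) n) (Kp n))" by (intro psi_superset) auto
  also have "\<dots> = scal a (psi f)" by (simp add: psi_def scal_sum_right scal_scal)
  finally show ?thesis .
qed

lemma Kp_0 [simp]: "Kp 0 = 1" by (simp add: Kp_def)

lemma psi_1 [simp]: "psi 1 = 1"
  using psi_single[of 0 1] by simp

lemma psi_Lc: "psi (Lc a) = scal a 1"
  by (simp add: Lc_def psi_single)

lemma psi_LX: "psi LX = K" by (simp add: psi_single Kp_def)
lemma psi_LXi: "psi LXi = Ki" by (simp add: psi_single Kp_def)

lemma Kp_nat: "Kp (int k) = K ^ k" by (simp add: Kp_def)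
lemma Kp_neg: "Kp (- int k) = Ki ^ k" unfolding Kp_def by (cases "k = 0") auto
lemma Kp_Suc: "Kp (int (Suc k)) = K * Kp (int k)" by (simp only: Kp_nat power_Suc)
lemma Kp_negSuc: "Kp (- int (Suc k)) = Ki * Kp (- int k)" by (simp only: Kp_neg power_Suc)

lemma Kp_K: "cg (K * Kp m) (Kp (m + 1))"
proof (cases "m \<ge> 0")
  case True
  then obtain k where "m = int k" by (metis nonneg_eq_int)
  then show ?thesis using Kp_nat[of "Suc k"] by (simp add: Kp_nat add.commute)
next
  case False
  then obtain k where m: "m = - int (Suc k)" by (intro that[of "nat (- m) - 1"]) simp
  have "K * Kp m = K * Ki * Ki ^ k" using Kp_neg[of "Suc k"] by (simp add: m mult.assoc)
  also have "cg \<dots> (1 * Ki ^ k)" by (rule cg_mult_right[OF cg_KKi])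
  also have "1 * Ki ^ k = Kp (m + 1)" using Kp_neg[of k] by (simp add: m)
  finally show ?thesis .
qed

lemma Kp_Ki: "cg (Ki * Kp m) (Kp (m - 1))"
proof (cases "m > 0")
  case True
  then obtain k where m: "m = int (Suc k)" by (intro that[of "nat m - 1"]) simp
  have "Ki * Kp m = Ki * K * K ^ k" using Kp_nat[of "Suc k"] by (simp add: m mult.assoc)
  also have "cg \<dots> (1 * K ^ k)" by (rule cg_mult_right[OF cg_KiK])
  also have "1 * K ^ k = Kp (m - 1)" using Kp_nat[of k] by (simp add: m)
  finally show ?thesis .
next
  case False
  then obtain k where m: "m = - int k" by (intro that[of "nat (- m)"]) simp
  have e: "- int k - 1 = - int (Suc k)" by simp
  have "Kp (- int k - 1) = Ki * Kp (- int k)" by (simp only: e Kp_negSuc)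
  then show ?thesis by (simp add: m)
qed

lemma Kp_mult_nat: "cg (Kp (int k) * Kp n) (Kp (int k + n))"
proof (induction k arbitrary: n)
  case 0 then show ?case by simp
next
  case (Suc k)
  have "Kp (int (Suc k)) * Kp n = K * (Kp (int k) * Kp n)" by (simp only: Kp_Suc mult.assoc)
  also have "cg \<dots> (K * Kp (int k + n))" by (rule cg_mult_left[OF Suc.IH])
  also have "cg \<dots> (Kp (int k + n + 1))" by (rule Kp_K)
  finally show ?case by (simp add: algebra_simps)
qed

lemma Kp_mult_neg: "cg (Kp (- int k) * Kp n) (Kp (- int k + n))"
proof (induction k arbitrary: n)
  case 0 then show ?case by simp
next
  case (Suc k)
  have "Kp (- int (Suc k)) * Kp n = Ki * (Kp (- int k) * Kp n)" by (simp only: Kp_neg power_Suc mult.assoc)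
  also have "cg \<dots> (Ki * Kp (- int k + n))" by (rule cg_mult_left[OF Suc.IH])
  also have "cg \<dots> (Kp (- int k + n - 1))" by (rule Kp_Ki)
  finally show ?case by (simp add: algebra_simps)
qed

lemma Kp_mult: "cg (Kp m * Kp n) (Kp (m + n))"
proof (cases "m \<ge> 0")
  case True
  then obtain k where "m = int k" by (metis nonneg_eq_int)
  then show ?thesis using Kp_mult_nat by simp
next
  case False
  then obtain k where "m = - int k" by (intro that[of "nat (- m)"]) simp
  then show ?thesis using Kp_mult_neg by simp
qed

lemma psi_mult: "cg (psi (f * g)) (psi f * psi g)"
proof (induction f rule: pm_induct)
  case zero then show ?case by simp
next
  case (single k c f)
  have "cg (psi (Poly_Mapping.single k c * g)) (psi (Poly_Mapping.single k c) * psi g)"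
  proof (induction g rule: pm_induct)
    case zero then show ?case by simp
  next
    case (single l d g)
    have "cg (psi (Poly_Mapping.single k c * Poly_Mapping.single l d))
              (psi (Poly_Mapping.single k c) * psi (Poly_Mapping.single l d))"
    proof -
      have "psi (Poly_Mapping.single k c * Poly_Mapping.single l d) = scal (c * d) (Kp (k + l))"
        by (simp add: mult_single psi_single)
      also have "cg \<dots> (scal (c * d) (Kp k * Kp l))" by (rule cg_scal[OF cg_sym[OF Kp_mult]])
      also have "scal (c * d) (Kp k * Kp l) = psi (Poly_Mapping.single k c) * psi (Poly_Mapping.single l d)"
        by (simp add: psi_single scal_mult_left scal_mult_right scal_scal mult.commute)
      finally show ?thesis .
    qed
    then show ?case using single
      by (simp add: distrib_left psi_add cg_add)
  qed
  then show ?case using single by (simp add: distrib_right psi_add cg_add)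
qed

lemma psi_prod: "cg (psi (\<Prod>i<t. f i)) (prod_list (map (\<lambda>i. psi (f i)) [0..<t]))"
proof (induction t)
  case 0 then show ?case by simp
next
  case (Suc t)
  have "cg (psi ((\<Prod>i<t. f i) * f t)) (psi (\<Prod>i<t. f i) * psi (f t))" by (rule psi_mult)
  also have "cg \<dots> (prod_list (map (\<lambda>i. psi (f i)) [0..<t]) * psi (f t))"
    by (rule cg_mult_right[OF Suc.IH])
  finally show ?case by simp
qed

lemma psi_kbr: "psi (kbr c) = Kbr c"
  by (simp add: kbr_def Kbr_def psi_diff psi_single Kp_def scal_diff_right scal_scal divide_inverse mult.commute dq_def[symmetric])

lemma psi_kbin: "cg (psi (kbin c t)) (Kbin c t)"
  unfolding kbin_def Kbin_def psi_Lc_mult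
  by (rule cg_scal) (use psi_prod[of "\<lambda>i. kbr (c - int i)" t] in \<open>simp add: psi_kbr\<close>)

lemma Kp_comm:
  assumes a: "a \<noteq> 0" and h1: "cg (K * Y) (scal a (Y * K))" and h2: "cg (Ki * Y) (scal (inverse a) (Y * Ki))"
  shows "cg (Kp n * Y) (scal (a powi n) (Y * Kp n))"
proof -
  have pos: "cg (Kp (int k) * Y) (scal (a ^ k) (Y * Kp (int k)))" for k
  proof (induction k)
    case 0 then show ?case by simp
  next
    case (Suc k)
    have "Kp (int (Suc k)) * Y = K * (Kp (int k) * Y)" by (simp only: Kp_Suc mult.assoc)
    also have "cg \<dots> (K * scal (a ^ k) (Y * Kp (int k)))" by (rule cg_mult_left[OF Suc.IH])
    also have "\<dots> = scal (a ^ k) ((K * Y) * Kp (int k))" by (simp add: scal_mult_right mult.assoc)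
    also have "cg \<dots> (scal (a ^ k) (scal a (Y * K) * Kp (int k)))" by (intro cg_scal cg_mult_right h1)
    also have "\<dots> = scal (a ^ Suc k) (Y * Kp (int (Suc k)))"
      by (simp only: scal_mult_left scal_scal Kp_Suc mult.assoc mult.commute power_Suc)
    finally show ?case .
  qed
  have neg: "cg (Kp (- int k) * Y) (scal (inverse a ^ k) (Y * Kp (- int k)))" for k
  proof (induction k)
    case 0 then show ?case by simp
  next
    case (Suc k)
    have "Kp (- int (Suc k)) * Y = Ki * (Kp (- int k) * Y)" by (simp only: Kp_neg power_Suc mult.assoc)
    also have "cg \<dots> (Ki * scal (inverse a ^ k) (Y * Kp (- int k)))" by (rule cg_mult_left[OF Suc.IH])
    also have "\<dots> = scal (inverse a ^ k) ((Ki * Y) * Kp (- int k))" by (simp add: scal_mult_right mult.assoc)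
    also have "cg \<dots> (scal (inverse a ^ k) (scal (inverse a) (Y * Ki) * Kp (- int k)))" by (intro cg_scal cg_mult_right h2)
    also have "\<dots> = scal (inverse a ^ Suc k) (Y * Kp (- int (Suc k)))"
      by (simp only: scal_mult_left scal_scal Kp_neg power_Suc mult.assoc mult.commute)
    finally show ?case .
  qed
  show ?thesis
  proof (cases "n \<ge> 0")
    case True
    then obtain k where "n = int k" by (metis nonneg_eq_int)
    then show ?thesis using pos[of k] by simp
  next
    case False
    then obtain k where "n = - int k" by (intro that[of "nat (- n)"]) simp
    then show ?thesis using neg[of k] by (simp add: power_int_minus power_inverse)
  qed
qed

lemma Kp_F: "cg (Kp n * F) (scal (Q (-2 * n)) (F * Kp n))"
proof -
  have "cg (Kp n * F) (scal (Q (-2) powi n) (F * Kp n))"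
    by (rule Kp_comm) (use cg_KF cg_KiF in \<open>simp_all add: power_int_minus\<close>)
  moreover have "Q (-2) powi n = Q (-2 * n)" by (simp only: power_int_mult[symmetric])
  ultimately show ?thesis by simp
qed

lemma Kp_E: "cg (Kp n * E) (scal (Q (2 * n)) (E * Kp n))"
proof -
  have "cg (Kp n * E) (scal (Q 2 powi n) (E * Kp n))"
    by (rule Kp_comm) (use cg_KE cg_KiE in \<open>simp_all add: power_int_minus\<close>)
  moreover have "Q 2 powi n = Q (2 * n)" by (simp only: power_int_mult[symmetric])
  ultimately show ?thesis by simp
qed

lemma E_Kp: "cg (E * Kp n) (scal (Q (-2 * n)) (Kp n * E))"
proof -
  have "cg (scal (Q (-2 * n)) (Kp n * E)) (scal (Q (-2 * n)) (scal (Q (2 * n)) (E * Kp n)))"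
    by (rule cg_scal[OF Kp_E])
  moreover have "Q (-2 * n) * Q (2 * n) = 1" by (simp add: Q_add[symmetric])
  ultimately show ?thesis by (simp add: scal_scal cg_sym)
qed

lemma psi_F: "cg (psi g * F) (F * psi (sig g))"
proof -
  have ks: "ks (sig g) \<subseteq> ks g" by (auto simp: in_keys_iff lk_sig)
  have "psi g * F = (\<Sum>n\<in>ks g. scal (lk g n) (Kp n * F))"
    by (simp add: psi_def sum_distrib_right scal_mult_left)
  also have "cg \<dots> (\<Sum>n\<in>ks g. scal (lk g n) (scal (Q (-2 * n)) (F * Kp n)))"
    by (intro cg_sum cg_scal Kp_F)
  also have "\<dots> = F * psi (sig g)"
    by (simp add: psi_superset[OF finite_keys ks] sum_distrib_left scal_mult_right scal_scal lk_sig mult.commute)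
  finally show ?thesis .
qed

lemma E_psi: "cg (E * psi g) (psi (sig g) * E)"
proof -
  have ks: "ks (sig g) \<subseteq> ks g" by (auto simp: in_keys_iff lk_sig)
  have "E * psi g = (\<Sum>n\<in>ks g. scal (lk g n) (E * Kp n))"
    by (simp add: psi_def sum_distrib_left scal_mult_right)
  also have "cg \<dots> (\<Sum>n\<in>ks g. scal (lk g n) (scal (Q (-2 * n)) (Kp n * E)))"
    by (intro cg_sum cg_scal E_Kp)
  also have "\<dots> = psi (sig g) * E"
    by (simp add: psi_superset[OF finite_keys ks] sum_distrib_right scal_mult_left scal_scal lk_sig mult.commute)
  finally show ?thesis .
qed

lemma psi_Fpow: "cg (psi g * F ^ a) (F ^ a * psi ((sig ^^ a) g))"
proof (induction a arbitrary: g)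
  case 0 then show ?case by simp
next
  case (Suc a)
  have "psi g * F ^ Suc a = (psi g * F) * F ^ a" by (simp add: mult.assoc)
  also have "cg \<dots> ((F * psi (sig g)) * F ^ a)" by (rule cg_mult_right[OF psi_F])
  also have "\<dots> = F * (psi (sig g) * F ^ a)" by (simp add: mult.assoc)
  also have "cg \<dots> (F * (F ^ a * psi ((sig ^^ a) (sig g))))" by (rule cg_mult_left[OF Suc.IH])
  also have "\<dots> = F ^ Suc a * psi ((sig ^^ Suc a) g)" by (simp only: funpow_Suc_right comp_apply power_Suc mult.assoc)
  finally show ?case .
qed

lemma Epow_psi: "cg (E ^ n * psi g) (psi ((sig ^^ n) g) * E ^ n)"
proof (induction n arbitrary: g)
  case 0 then show ?case by simp
next
  case (Suc n)
  have "E ^ Suc n * psi g = E ^ n * (E * psi g)" by (simp only: mult.assoc power_Suc2)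
  also have "cg \<dots> (E ^ n * (psi (sig g) * E))" by (rule cg_mult_left[OF E_psi])
  also have "\<dots> = (E ^ n * psi (sig g)) * E" by (simp add: mult.assoc)
  also have "cg \<dots> ((psi ((sig ^^ n) (sig g)) * E ^ n) * E)" by (rule cg_mult_right[OF Suc.IH])
  also have "\<dots> = psi ((sig ^^ Suc n) g) * E ^ Suc n" by (simp only: funpow_Suc_right comp_apply power_Suc2 mult.assoc)
  finally show ?case .
qed



lemma psi_kbr0: "psi (kbr 0) = scal (inverse dq) (K - Ki)"
  by (simp add: psi_kbr Kbr_def dq_def[symmetric])

lemma cg_EF2: "cg (E * F) (F * E + psi (kbr 0))"
  using cg_EF by (simp add: psi_kbr0)

lemma scal_qint_shift: "scal (qint (int a)) (F ^ (a - 1) * F * X) = scal (qint (int a)) (F ^ a * X)"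
  by (cases a) (simp_all add: power_Suc2[symmetric])

lemma E_Fpow: "cg (E * F ^ a) (F ^ a * E + scal (qint (int a)) (F ^ (a - 1) * psi (kbr (1 - int a))))"
proof (induction a)
  case 0 then show ?case by simp
next
  case (Suc a)
  have sk: "psi (sig (kbr (1 - int a))) = psi (kbr (- int a - 1))"
  proof -
    have "1 - int a - 2 = - int a - 1" by simp
    then show ?thesis by (simp only: sig_kbr)
  qed
  have "E * F ^ Suc a = (E * F ^ a) * F" by (simp only: power_Suc2 mult.assoc)
  also have "cg \<dots> ((F ^ a * E + scal (qint (int a)) (F ^ (a - 1) * psi (kbr (1 - int a)))) * F)"
    by (rule cg_mult_right[OF Suc.IH])
  also have "\<dots> = F ^ a * (E * F) + scal (qint (int a)) (F ^ (a - 1) * (psi (kbr (1 - int a)) * F))"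
    by (simp add: distrib_right scal_mult_left mult.assoc)
  also have "cg \<dots> (F ^ a * (F * E + psi (kbr 0)) + scal (qint (int a)) (F ^ (a - 1) * (F * psi (sig (kbr (1 - int a))))))"
    by (intro cg_add cg_mult_left cg_scal cg_EF2 psi_F)
  also have "\<dots> = F ^ Suc a * E + (F ^ a * psi (kbr 0) + scal (qint (int a)) (F ^ (a - 1) * F * psi (sig (kbr (1 - int a)))))"
    by (simp only: distrib_left mult.assoc power_Suc2 add.assoc)
  also have "\<dots> = F ^ Suc a * E + F ^ a * psi (kbr 0 + Lc (qint (int a)) * kbr (- int a - 1))"
    by (simp only: sk scal_qint_shift psi_add psi_Lc_mult scal_mult_right distrib_left)
  also have "kbr 0 + Lc (qint (int a)) * kbr (- int a - 1) = Lc (qint (int a + 1)) * kbr (- int a)"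
    using id_L2[of "int a"] by simp
  also have "F ^ Suc a * E + F ^ a * psi (Lc (qint (int a + 1)) * kbr (- int a))
     = F ^ Suc a * E + scal (qint (int (Suc a))) (F ^ (Suc a - 1) * psi (kbr (1 - int (Suc a))))"
    by (simp add: psi_Lc_mult scal_mult_right add.commute)
  finally show ?case .
qed

definition FD :: "int \<Rightarrow> falg" where
  "FD m = (if m < 0 then 0 else Fdiv (nat m))"

lemma Fdiv_0 [simp]: "Fdiv 0 = 1" by (simp add: Fdiv_def)
lemma Ediv_0 [simp]: "Ediv 0 = 1" by (simp add: Ediv_def)

lemma FD_nat [simp]: "FD (int a) = Fdiv a" by (simp add: FD_def)
lemma FD_neg: "m < 0 \<Longrightarrow> FD m = 0" by (simp add: FD_def)
lemma FD_0 [simp]: "FD 0 = 1" by (simp add: FD_def)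

lemma E_FD: "cg (E * FD m) (FD m * E + FD (m - 1) * psi (kbr (1 - m)))"
proof (cases "m < 0")
  case True then show ?thesis by (simp add: FD_neg)
next
  case False
  then obtain a where m: "m = int a" by (metis nonneg_eq_int not_less)
  show ?thesis
  proof (cases a)
    case 0 then show ?thesis by (simp add: m FD_neg)
  next
    case (Suc b)
    have FDm: "FD m = Fdiv a" by (simp add: m)
    have ab: "a - 1 = b" "int a = m" using Suc m by auto
    have "E * FD m = scal (inverse (qfact a)) (E * F ^ a)"
      by (simp only: FDm Fdiv_def scal_mult_right)
    also have "cg \<dots> (scal (inverse (qfact a)) (F ^ a * E + scal (qint (int a)) (F ^ (a - 1) * psi (kbr (1 - int a)))))"
      by (rule cg_scal[OF E_Fpow])
    also have "\<dots> = FD m * E + scal (inverse (qfact a) * qint (int a)) (F ^ b * psi (kbr (1 - m)))"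
      by (simp only: FDm ab Fdiv_def scal_add_right scal_scal scal_mult_left)
    also have "inverse (qfact a) * qint (int a) = inverse (qfact b)"
      using qint_nz[of "int a"] by (simp add: Suc qfact_Suc del: of_nat_Suc)
    also have "scal (inverse (qfact b)) (F ^ b * psi (kbr (1 - m))) = FD (m - 1) * psi (kbr (1 - m))"
      by (simp add: m Suc Fdiv_def scal_mult_left)
    finally show ?thesis .
  qed
qed

lemma E_Ediv: "E * Ediv n = scal (qint (int (Suc n))) (Ediv (Suc n))"
proof -
  have "qint (int (Suc n)) * inverse (qfact (Suc n)) = inverse (qfact n)"
    using qint_nz[of "int (Suc n)"] by (simp add: qfact_Suc del: of_nat_Suc)
  then show ?thesis by (simp add: Ediv_def scal_mult_right scal_scal)
qed

lemma Ediv_mult: "Ediv n * Ediv m = scal (qfact (n + m) / (qfact n * qfact m)) (Ediv (n + m))"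
proof -
  have sc: "inverse (qfact m) * inverse (qfact n) = qfact (n + m) / (qfact n * qfact m) * inverse (qfact (n + m))"
    by (simp add: field_simps)
  show ?thesis by (simp only: Ediv_def scal_mult_right scal_mult_left scal_scal power_add sc)
qed

lemma Fdiv_mult: "Fdiv n * Fdiv m = scal (qfact (n + m) / (qfact n * qfact m)) (Fdiv (n + m))"
proof -
  have sc: "inverse (qfact m) * inverse (qfact n) = qfact (n + m) / (qfact n * qfact m) * inverse (qfact (n + m))"
    by (simp add: field_simps)
  show ?thesis by (simp only: Fdiv_def scal_mult_right scal_mult_left scal_scal power_add sc)
qed

lemma Ediv_psi: "cg (Ediv n * psi g) (psi ((sig ^^ n) g) * Ediv n)"
  unfolding Ediv_def scal_mult_left scal_mult_right by (rule cg_scal[OF Epow_psi])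

lemma psi_Fdiv: "cg (psi g * Fdiv a) (Fdiv a * psi ((sig ^^ a) g))"
  unfolding Fdiv_def scal_mult_left scal_mult_right by (rule cg_scal[OF psi_Fpow])

section \<open>The commutation formula for divided powers\<close>

lemma term_cong:
  "cg (E * (FD x * psi g * Ediv m))
      (FD x * psi (Lc (qint (int m + 1)) * sig g) * Ediv (Suc m) + FD (x - 1) * psi (kbr (1 - x) * g) * Ediv m)"
proof -
  have "E * (FD x * psi g * Ediv m) = (E * FD x) * psi g * Ediv m" by (simp add: mult.assoc)
  also have "cg \<dots> ((FD x * E + FD (x - 1) * psi (kbr (1 - x))) * psi g * Ediv m)"
    by (intro cg_mult_right E_FD)
  also have "\<dots> = FD x * (E * psi g) * Ediv m + FD (x - 1) * (psi (kbr (1 - x)) * psi g) * Ediv m"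
    by (simp add: distrib_right mult.assoc)
  also have "cg \<dots> (FD x * (psi (sig g) * E) * Ediv m + FD (x - 1) * psi (kbr (1 - x) * g) * Ediv m)"
    by (intro cg_add cg_mult_right cg_mult_left E_psi cg_sym[OF psi_mult])
  also have "\<dots> = FD x * psi (Lc (qint (int m + 1)) * sig g) * Ediv (Suc m) + FD (x - 1) * psi (kbr (1 - x) * g) * Ediv m"
    by (simp add: mult.assoc E_Ediv psi_Lc_mult scal_mult_right scal_mult_left add.commute)
  finally show ?thesis .
qed

definition SE :: "nat \<Rightarrow> int \<Rightarrow> falg" where
  "SE n a = (\<Sum>j\<le>n. FD (a - int j) * psi (kbin (2 * int j - int n - a) j) * Ediv (n - j))"

lemma SE_0: "SE 0 a = FD a"
  by (simp add: SE_def)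

lemma SE_step:
  "scal (qint (int (Suc n))) (SE (Suc n) a) =
     (\<Sum>j\<le>n. FD (a - int j) * psi (Lc (qint (int (n - j) + 1)) * sig (kbin (2 * int j - int n - a) j)) * Ediv (Suc (n - j)))
   + (\<Sum>j\<le>n. FD (a - int j - 1) * psi (kbr (1 - (a - int j)) * kbin (2 * int j - int n - a) j) * Ediv (n - j))"
proof -
  define T1 where "T1 j = FD (a - int j) * psi (Lc (qint (int (n - j) + 1)) * sig (kbin (2 * int j - int n - a) j)) * Ediv (Suc (n - j))" for j
  define T2 where "T2 j = FD (a - int j - 1) * psi (kbr (1 - (a - int j)) * kbin (2 * int j - int n - a) j) * Ediv (n - j)" for j
  define A where "A t = FD (a - int (Suc t)) * psi (Lc (qint (int n - int t)) * kbin (2 * int t - int n - a) (Suc t)) * Ediv (n - t)" for t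
  define f where "f j = FD (a - int j) * psi (Lc (qint (int (Suc n))) * kbin (2 * int j - int (Suc n) - a) j) * Ediv (Suc n - j)" for j
  have "scal (qint (int (Suc n))) (SE (Suc n) a) = (\<Sum>j\<le>Suc n. f j)"
    unfolding SE_def f_def scal_sum_right
    by (rule sum.cong[OF refl]) (simp add: psi_Lc_mult scal_mult_left scal_mult_right)
  also have "\<dots> = f 0 + (\<Sum>t\<le>n. f (Suc t))" by (rule sum.atMost_Suc_shift)
  also have "f 0 = T1 0" by (simp add: f_def T1_def psi_Lc_mult scal_mult_left scal_mult_right add.commute)
  also have "(\<Sum>t\<le>n. f (Suc t)) = (\<Sum>t\<le>n. A t + T2 t)"
  proof (rule sum.cong[OF refl])
    fix t assume "t \<in> {..n}"
    define c where "c = 2 * int t - int n - a"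
    have e1: "2 * int (Suc t) - int (Suc n) - a = c + 1" by (simp add: c_def)
    have e2: "int (Suc n) - int (Suc t) = int n - int t" by simp
    have e3: "c + int (Suc n) - int t = 1 - (a - int t)" by (simp add: c_def)
    have "Lc (qint (int (Suc n))) * kbin (2 * int (Suc t) - int (Suc n) - a) (Suc t)
        = Lc (qint (int n - int t)) * kbin c (Suc t) + kbr (1 - (a - int t)) * kbin c t"
      unfolding e1 id_E e2 e3 ..
    then show "f (Suc t) = A t + T2 t"
      by (simp add: f_def A_def T2_def c_def psi_add distrib_left distrib_right algebra_simps)
  qed
  also have "\<dots> = (\<Sum>t\<le>n. A t) + (\<Sum>t\<le>n. T2 t)" by (rule sum.distrib)
  also have "(\<Sum>t\<le>n. A t) = (\<Sum>t<n. T1 (Suc t))"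
  proof -
    have "A n = 0" by (simp add: A_def psi_Lc_mult)
    then have "(\<Sum>t\<le>n. A t) = (\<Sum>t<n. A t)" by (simp add: lessThan_Suc_atMost[symmetric])
    also have "\<dots> = (\<Sum>t<n. T1 (Suc t))"
    proof (rule sum.cong[OF refl])
      fix t assume "t \<in> {..<n}"
      then have tn: "t < n" by simp
      have e1: "int (n - Suc t) + 1 = int n - int t" using tn by simp
      have e2: "Suc (n - Suc t) = n - t" using tn by simp
      have e3: "2 * int (Suc t) - int n - a - 2 = 2 * int t - int n - a" by simp
      show "A t = T1 (Suc t)" unfolding A_def T1_def e1 e2 sig_kbin e3 ..
    qed
    finally show ?thesis .
  qed
  also have "T1 0 + ((\<Sum>t<n. T1 (Suc t)) + (\<Sum>t\<le>n. T2 t)) = (\<Sum>j\<le>n. T1 j) + (\<Sum>t\<le>n. T2 t)"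
    by (simp add: sum.atMost_shift[of T1 n])
  finally show ?thesis unfolding T1_def T2_def .
qed

lemma EF_formula: "cg (Ediv n * FD a) (SE n a)"
proof (induction n arbitrary: a)
  case 0 then show ?case by (simp add: SE_0)
next
  case (Suc n)
  have "scal (qint (int (Suc n))) (Ediv (Suc n) * FD a) = E * (Ediv n * FD a)"
    by (simp only: mult.assoc[symmetric] E_Ediv scal_mult_left)
  also have "cg \<dots> (E * SE n a)" by (rule cg_mult_left[OF Suc.IH])
  also have "E * SE n a = (\<Sum>j\<le>n. E * (FD (a - int j) * psi (kbin (2 * int j - int n - a) j) * Ediv (n - j)))"
    by (simp add: SE_def sum_distrib_left)
  also have "cg \<dots> (\<Sum>j\<le>n. FD (a - int j) * psi (Lc (qint (int (n - j) + 1)) * sig (kbin (2 * int j - int n - a) j)) * Ediv (Suc (n - j))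
          + FD (a - int j - 1) * psi (kbr (1 - (a - int j)) * kbin (2 * int j - int n - a) j) * Ediv (n - j))"
    by (intro cg_sum term_cong)
  also have "\<dots> = scal (qint (int (Suc n))) (SE (Suc n) a)"
    unfolding SE_step by (rule sum.distrib)
  finally have "cg (scal (qint (int (Suc n))) (Ediv (Suc n) * FD a)) (scal (qint (int (Suc n))) (SE (Suc n) a))" .
  then have "cg (scal (inverse (qint (int (Suc n)))) (scal (qint (int (Suc n))) (Ediv (Suc n) * FD a)))
                (scal (inverse (qint (int (Suc n)))) (scal (qint (int (Suc n))) (SE (Suc n) a)))"
    by (rule cg_scal)
  moreover have "inverse (qint (int (Suc n))) * qint (int (Suc n)) = 1"
    using qint_nz[of "int (Suc n)"] by (simp del: of_nat_Suc)
  ultimately show ?case by (simp add: scal_scal del: of_nat_Suc)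
qed



inductive_set MS :: "lp set" where
  zero: "0 \<in> MS"
| base: "c = 0 \<or> (c = 1 \<and> t \<ge> 1) \<Longrightarrow> a \<in> Laurent \<Longrightarrow> Lc a * kbin c t \<in> MS"
| add: "f \<in> MS \<Longrightarrow> g \<in> MS \<Longrightarrow> f + g \<in> MS"

lemma int_two_sided:
  fixes P :: "int \<Rightarrow> bool"
  assumes "P c0" "\<And>c. P c \<Longrightarrow> P (c + 1)" "\<And>c. P (c + 1) \<Longrightarrow> P c"
  shows "P c"
proof (induction c rule: int_induct[where k = c0])
  case base then show ?case using assms(1) .
next
  case (step1 i) then show ?case using assms(2) by blast
next
  case (step2 i) then show ?case using assms(3)[of "i - 1"] by simp
qed

lemma MS_smult: assumes "a \<in> Laurent" "f \<in> MS" shows "Lc a * f \<in> MS"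
  using assms(2)
proof (induction f rule: MS.induct)
  case zero then show ?case by (simp add: MS.zero)
next
  case (base c t b)
  then show ?case using MS.base[of c t "a * b"] assms(1) by (simp add: Lc_mult[symmetric] mult.assoc Laurent_mult)
next
  case (add f g) then show ?case by (simp add: distrib_left MS.add)
qed

lemma MS_uminus: "f \<in> MS \<Longrightarrow> - f \<in> MS"
  using MS_smult[of "-1" f] Laurent_uminus[OF Laurent_one] by (simp add: Lc_uminus)

lemma MS_diff: "f \<in> MS \<Longrightarrow> g \<in> MS \<Longrightarrow> f - g \<in> MS"
  using MS.add[of f "- g"] MS_uminus[of g] by simp

lemma MS_sum: "(\<And>i. i \<in> S \<Longrightarrow> f i \<in> MS) \<Longrightarrow> sum f S \<in> MS"
  by (induction S rule: infinite_finite_induct) (auto intro: MS.zero MS.add)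

lemma MS_kbin0: "kbin 0 t \<in> MS"
  using MS.base[of 0 t 1] Laurent_one by simp

lemma MS_kbin1: "kbin 1 t \<in> MS"
proof (cases t)
  case 0 then show ?thesis using MS_kbin0[of 0] by simp
next
  case (Suc s) then show ?thesis using MS.base[of 1 t 1] Laurent_one by simp
qed

lemma MS_1: "1 \<in> MS" using MS_kbin0[of 0] by simp

definition Rt :: "int \<Rightarrow> nat \<Rightarrow> lp" where
  "Rt c t = (if t \<ge> 2 then kbin c (t - 2) else 0)"

lemma C_rel: "kbin (c + 2) t = Lc (Q (int t) + Q (- int t)) * kbin (c + 1) t - kbin c t + Rt c t"
proof (cases t)
  case 0 then show ?thesis using id_C0[of c] by (simp add: Rt_def)
next
  case (Suc s)
  show ?thesis
  proof (cases s)
    case 0 then show ?thesis using id_C1[of c] Suc by (simp add: Rt_def)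
  next
    case (Suc r)
    then show ?thesis using id_C2[of c r] \<open>t = Suc s\<close> by (simp add: Rt_def add.commute)
  qed
qed

lemma MS_kbin: "kbin c t \<in> MS"
proof (induction t arbitrary: c rule: less_induct)
  case (less t)
  have R: "Rt c t \<in> MS" for c
    using less by (auto simp: Rt_def MS.zero)
  let ?coef = "Lc (Q (int t) + Q (- int t))"
  have lc: "Q (int t) + Q (- int t) \<in> Laurent" by (intro Laurent_add Laurent_Q)
  let ?P = "\<lambda>c. kbin c t \<in> MS \<and> kbin (c + 1) t \<in> MS"
  have base: "?P 0" using MS_kbin0 MS_kbin1 by simp
  have up: "?P (c + 1)" if h: "?P c" for c
  proof -
    have "kbin (c + 2) t \<in> MS" unfolding C_rel
      using h R lc by (intro MS.add MS_diff MS_smult) auto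
    then show ?thesis using h by (simp add: add.assoc)
  qed
  have down: "?P c" if h: "?P (c + 1)" for c
  proof -
    have e: "kbin c t = ?coef * kbin (c + 1) t - kbin (c + 2) t + Rt c t"
      using C_rel[of c t] by (simp add: algebra_simps)
    have "kbin c t \<in> MS" unfolding e
      using h R lc by (intro MS.add MS_diff MS_smult) (auto simp: add.assoc)
    then show ?thesis using h by simp
  qed
  have "?P c" by (rule int_two_sided[of ?P 0 c, OF base up down])
  then show ?case by simp
qed

lemma MS_LX: "f \<in> MS \<Longrightarrow> LX * f \<in> MS"
proof (induction f rule: MS.induct)
  case zero then show ?case by (simp add: MS.zero)
next
  case (base c t a)
  have "LX * (Lc a * kbin c t) = Lc a * (LX * kbin c t)" by (simp add: mult_ac)
  also have "\<dots> \<in> MS" unfolding id_X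
    using base by (intro MS_smult MS_diff MS_kbin Laurent_Q) auto
  finally show ?case .
next
  case (add f g) then show ?case by (simp add: distrib_left MS.add)
qed

lemma MS_LXi: "f \<in> MS \<Longrightarrow> LXi * f \<in> MS"
proof (induction f rule: MS.induct)
  case zero then show ?case by (simp add: MS.zero)
next
  case (base c t a)
  have "LXi * (Lc a * kbin c t) = Lc a * (LXi * kbin c t)" by (simp add: mult_ac)
  also have "\<dots> \<in> MS" unfolding id_Xi
    using base by (intro MS_smult MS_diff MS_kbin Laurent_Q) auto
  finally show ?case .
next
  case (add f g) then show ?case by (simp add: distrib_left MS.add)
qed

lemma kbin_shift: "kbin (c + 1) (Suc s) = Lc (Q (int s + 1)) * kbin c (Suc s) + Lc (Q (int s - c)) * (LXi * kbin c s)"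
proof -
  have "Lc (Q (int s - c)) * (LXi * kbin c s) = Lc (Q (int s - c) * Q (c - int s)) * (kbin (c + 1) (Suc s) - Lc (Q (int s + 1)) * kbin c (Suc s))"
    unfolding id_Xi by (simp add: Lc_mult[symmetric] mult.assoc)
  also have "Q (int s - c) * Q (c - int s) = 1" by (simp add: Q_add[symmetric])
  finally show ?thesis by simp
qed

lemma MS_mult_kbin: "kbin c s * kbin c' t \<in> MS"
proof (induction s arbitrary: c)
  case 0 then show ?case by (simp add: MS_kbin)
next
  case (Suc s)
  let ?P = "\<lambda>c. kbin c (Suc s) * kbin c' t \<in> MS"
  have base: "?P (c' - int t)"
  proof -
    have "kbin c' t * kbin (c' - int t) (Suc s) \<in> MS"
      unfolding kbin_prod by (intro MS_smult MS_kbin qfact_ratio_Laurent)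
    then show ?thesis by (simp add: mult.commute)
  qed
  have up: "?P (c + 1)" if h: "?P c" for c
  proof -
    have "kbin (c + 1) (Suc s) * kbin c' t = Lc (Q (int s + 1)) * (kbin c (Suc s) * kbin c' t) + Lc (Q (int s - c)) * (LXi * (kbin c s * kbin c' t))"
      unfolding kbin_shift by (simp add: algebra_simps)
    also have "\<dots> \<in> MS" using h Suc.IH by (intro MS.add MS_smult MS_LXi Laurent_Q)
    finally show ?thesis .
  qed
  have down: "?P c" if h: "?P (c + 1)" for c
  proof -
    have "kbin c (Suc s) * kbin c' t = Lc (Q (- (int s + 1))) * (kbin (c + 1) (Suc s) * kbin c' t - Lc (Q (int s - c)) * (LXi * (kbin c s * kbin c' t)))"
    proof -
      have "Lc (Q (- (int s + 1))) * (kbin (c + 1) (Suc s) * kbin c' t - Lc (Q (int s - c)) * (LXi * (kbin c s * kbin c' t)))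
          = Lc (Q (- (int s + 1)) * Q (int s + 1)) * (kbin c (Suc s) * kbin c' t)"
        unfolding kbin_shift by (simp add: algebra_simps Lc_mult[symmetric])
      also have "Q (- (int s + 1)) * Q (int s + 1) = 1" by (simp add: Q_add[symmetric])
      finally show ?thesis by simp
    qed
    also have "\<dots> \<in> MS" using h Suc.IH by (intro MS_diff MS_smult MS_LXi Laurent_Q)
    finally show ?thesis .
  qed
  show ?case by (rule int_two_sided[of ?P "c' - int t" c, OF base up down])
qed

lemma MS_mult: "f \<in> MS \<Longrightarrow> g \<in> MS \<Longrightarrow> f * g \<in> MS"
proof (induction f rule: MS.induct)
  case zero then show ?case by (simp add: MS.zero)
next
  case (base c t a)
  from base.prems show ?case
  proof (induction g rule: MS.induct)
    case zero then show ?case by (simp add: MS.zero)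
  next
    case (base c' t' b)
    have "Lc a * kbin c t * (Lc b * kbin c' t') = Lc (a * b) * (kbin c t * kbin c' t')"
      by (simp add: Lc_mult[symmetric] mult_ac)
    also have "\<dots> \<in> MS" using base.hyps(2) \<open>a \<in> Laurent\<close>
      by (intro MS_smult MS_mult_kbin Laurent_mult)
    finally show ?case .
  next
    case (add f g) then show ?case by (simp add: distrib_left MS.add)
  qed
next
  case (add f g) then show ?case by (simp add: distrib_right MS.add)
qed

lemma MS_sig: "f \<in> MS \<Longrightarrow> sig f \<in> MS"
proof (induction f rule: MS.induct)
  case zero then show ?case by (simp add: MS.zero)
next
  case (base c t a)
  then show ?case by (simp add: sig_mult sig_kbin MS_smult MS_kbin)
next
  case (add f g) then show ?case by (simp add: sig_add MS.add)
qed

lemma MS_sigpow: "f \<in> MS \<Longrightarrow> (sig ^^ n) f \<in> MS"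
  by (induction n) (auto simp: MS_sig)

lemma MS_LX_in: "LX \<in> MS" using MS_LX[OF MS_1] by simp
lemma MS_LXi_in: "LXi \<in> MS" using MS_LXi[OF MS_1] by simp



definition ASp :: "'i set \<Rightarrow> ('i \<Rightarrow> falg) \<Rightarrow> falg set" where
  "ASp J b = {x. \<exists>S c. finite S \<and> S \<subseteq> J \<and> (\<forall>j\<in>S. c j \<in> Laurent) \<and>
        x - (\<Sum>j\<in>S. scal (c j) (b j)) \<in> relideal}"

lemma ASp_iff: "x \<in> ASp J b \<longleftrightarrow> (\<exists>S c. finite S \<and> S \<subseteq> J \<and> (\<forall>j\<in>S. c j \<in> Laurent) \<and>
        cg x (\<Sum>j\<in>S. scal (c j) (b j)))"
  by (simp add: ASp_def cg_def)

lemma ASp_cg: "x \<in> ASp J b \<Longrightarrow> cg y x \<Longrightarrow> y \<in> ASp J b"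
  unfolding ASp_iff using cg_trans by blast

lemma ASp_zero: "0 \<in> ASp J b"
  unfolding ASp_iff by (rule exI[of _ "{}"]) simp

lemma ASp_base: "j \<in> J \<Longrightarrow> b j \<in> ASp J b"
  unfolding ASp_iff by (intro exI[of _ "{j}"] exI[of _ "\<lambda>_. 1"]) (simp add: Laurent_one)

lemma sum_restrict_aux:
  assumes "finite S" "finite S'"
  shows "(\<Sum>j\<in>S \<union> S'. scal (if j \<in> S then c j else 0) (b j)) = (\<Sum>j\<in>S. scal (c j) (b j))"
proof -
  have "(\<Sum>j\<in>S \<union> S'. scal (if j \<in> S then c j else 0) (b j)) = (\<Sum>j\<in>S \<union> S'. if j \<in> S then scal (c j) (b j) else 0)"
    by (rule sum.cong) auto
  also have "\<dots> = (\<Sum>j\<in>{x \<in> S \<union> S'. x \<in> S}. scal (c j) (b j))"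
    by (rule sum.inter_filter[symmetric]) (use assms in simp)
  also have "{x \<in> S \<union> S'. x \<in> S} = S" by auto
  finally show ?thesis .
qed

lemma ASp_add: assumes "x \<in> ASp J b" "y \<in> ASp J b" shows "x + y \<in> ASp J b"
proof -
  from assms obtain S c S' c' where h: "finite S" "S \<subseteq> J" "\<forall>j\<in>S. c j \<in> Laurent" "cg x (\<Sum>j\<in>S. scal (c j) (b j))"
    "finite S'" "S' \<subseteq> J" "\<forall>j\<in>S'. c' j \<in> Laurent" "cg y (\<Sum>j\<in>S'. scal (c' j) (b j))"
    unfolding ASp_iff by blast
  define d where "d j = (if j \<in> S then c j else 0) + (if j \<in> S' then c' j else 0)" for j
  have "(\<Sum>j\<in>S \<union> S'. scal (d j) (b j)) = (\<Sum>j\<in>S \<union> S'. scal (if j \<in> S then c j else 0) (b j))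
      + (\<Sum>j\<in>S' \<union> S. scal (if j \<in> S' then c' j else 0) (b j))"
    by (simp add: d_def scal_add_left sum.distrib Un_commute)
  also have "\<dots> = (\<Sum>j\<in>S. scal (c j) (b j)) + (\<Sum>j\<in>S'. scal (c' j) (b j))"
    using h by (simp add: sum_restrict_aux)
  finally have e: "(\<Sum>j\<in>S \<union> S'. scal (d j) (b j)) = (\<Sum>j\<in>S. scal (c j) (b j)) + (\<Sum>j\<in>S'. scal (c' j) (b j))" .
  have "cg (x + y) (\<Sum>j\<in>S \<union> S'. scal (d j) (b j))" unfolding e using h by (intro cg_add)
  moreover have "\<forall>j\<in>S \<union> S'. d j \<in> Laurent" using h by (auto simp: d_def intro!: Laurent_add Laurent_zero)
  ultimately show ?thesis unfolding ASp_iff using h by (intro exI[of _ "S \<union> S'"] exI[of _ d]) auto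
qed

lemma ASp_smult: assumes "a \<in> Laurent" "x \<in> ASp J b" shows "scal a x \<in> ASp J b"
proof -
  from assms obtain S c where h: "finite S" "S \<subseteq> J" "\<forall>j\<in>S. c j \<in> Laurent" "cg x (\<Sum>j\<in>S. scal (c j) (b j))"
    unfolding ASp_iff by blast
  have "cg (scal a x) (\<Sum>j\<in>S. scal (a * c j) (b j))"
    using cg_scal[OF h(4), of a] by (simp add: scal_sum_right scal_scal)
  then show ?thesis unfolding ASp_iff using h assms(1)
    by (intro exI[of _ S] exI[of _ "\<lambda>j. a * c j"]) (auto intro: Laurent_mult)
qed

lemma ASp_sum: "(\<And>i. i \<in> I \<Longrightarrow> f i \<in> ASp J b) \<Longrightarrow> sum f I \<in> ASp J b"
  by (induction I rule: infinite_finite_induct) (auto intro: ASp_zero ASp_add)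

lemma ASp_left_mult:
  assumes "\<And>j. j \<in> J \<Longrightarrow> g * b j \<in> ASp J b" "x \<in> ASp J b"
  shows "g * x \<in> ASp J b"
proof -
  from assms(2) obtain S c where h: "finite S" "S \<subseteq> J" "\<forall>j\<in>S. c j \<in> Laurent" "cg x (\<Sum>j\<in>S. scal (c j) (b j))"
    unfolding ASp_iff by blast
  have "cg (g * x) (\<Sum>j\<in>S. scal (c j) (g * b j))"
    using cg_mult_left[OF h(4), of g] by (simp add: sum_distrib_left scal_mult_right)
  moreover have "(\<Sum>j\<in>S. scal (c j) (g * b j)) \<in> ASp J b"
    using h assms(1) by (intro ASp_sum ASp_smult) auto
  ultimately show ?thesis using ASp_cg by blast
qed

lemma Asubalg_into:
  assumes one: "1 \<in> ASp J b" and gen: "\<And>g x. g \<in> G \<Longrightarrow> x \<in> ASp J b \<Longrightarrow> g * x \<in> ASp J b"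
  shows "x \<in> Asubalg G \<Longrightarrow> x \<in> ASp J b"
proof -
  have "\<forall>y \<in> ASp J b. x * y \<in> ASp J b" if "x \<in> Asubalg G" for x
    using that
  proof (induction x rule: Asubalg.induct)
    case one then show ?case by simp
  next
    case (gen g) then show ?case using assms(2) by blast
  next
    case (add x y) then show ?case by (simp add: distrib_right ASp_add)
  next
    case (mult x y) then show ?case by (simp add: mult.assoc)
  next
    case (smult a x) then show ?case by (simp add: scal_mult_left ASp_smult)
  qed
  then show "x \<in> Asubalg G \<Longrightarrow> x \<in> ASp J b" using one by fastforce
qed

lemma in_Asubalg_into:
  assumes "1 \<in> ASp J b" "\<And>g x. g \<in> G \<Longrightarrow> x \<in> ASp J b \<Longrightarrow> g * x \<in> ASp J b" "in_Asubalg G x"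
  shows "x \<in> ASp J b"
proof -
  from assms(3) obtain y where "y \<in> Asubalg G" "x - y \<in> relideal" unfolding in_Asubalg_def by blast
  then show ?thesis using Asubalg_into[OF assms(1,2)] ASp_cg unfolding cg_def by blast
qed

definition J1 :: "(int \<times> nat) set" where "J1 = {(c, t). c = 0 \<or> (c = 1 \<and> t \<ge> 1)}"
definition b1 :: "int \<times> nat \<Rightarrow> falg" where "b1 = (\<lambda>(c, t). Kbin c t)"

lemma psi_MS_AS1: "f \<in> MS \<Longrightarrow> psi f \<in> ASp J1 b1"
proof (induction f rule: MS.induct)
  case zero then show ?case by (simp add: ASp_zero)
next
  case (base c t a)
  have "b1 (c, t) \<in> ASp J1 b1" using base by (intro ASp_base) (auto simp: J1_def)
  then have "scal a (Kbin c t) \<in> ASp J1 b1" using base by (intro ASp_smult) (auto simp: b1_def)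
  moreover have "cg (psi (Lc a * kbin c t)) (scal a (Kbin c t))"
    unfolding psi_Lc_mult by (rule cg_scal[OF psi_kbin])
  ultimately show ?case using ASp_cg by blast
next
  case (add f g) then show ?case by (simp add: psi_add ASp_add)
qed

lemma gens_psi: "g \<in> {K, Ki} \<union> range (Kbin 0) \<Longrightarrow> \<exists>h\<in>MS. cg g (psi h)"
proof -
  assume "g \<in> {K, Ki} \<union> range (Kbin 0)"
  then consider "g = K" | "g = Ki" | s where "g = Kbin 0 s" by blast
  then show ?thesis
  proof cases
    case 1 then show ?thesis using MS_LX_in by (intro bexI[of _ LX]) (auto simp: psi_LX)
  next
    case 2 then show ?thesis using MS_LXi_in by (intro bexI[of _ LXi]) (auto simp: psi_LXi)
  next
    case 3 then show ?thesis using MS_kbin0 psi_kbin by (intro bexI[of _ "kbin 0 s"]) (auto intro: cg_sym)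
  qed
qed

lemma span1: "in_Asubalg U0A_gens x \<Longrightarrow> x \<in> ASp J1 b1"
proof (rule in_Asubalg_into)
  show "1 \<in> ASp J1 b1" using psi_MS_AS1[OF MS_1] by simp
next
  fix g x assume g: "g \<in> U0A_gens" and x: "x \<in> ASp J1 b1"
  from g obtain h where h: "h \<in> MS" "cg g (psi h)" using gens_psi unfolding U0A_gens_def by blast
  show "g * x \<in> ASp J1 b1"
  proof (rule ASp_left_mult[OF _ x])
    fix j assume "j \<in> J1"
    obtain c t where j: "j = (c, t)" by (cases j)
    have "cg (g * b1 j) (psi h * psi (kbin c t))"
      unfolding j b1_def by (simp add: cg_mult h(2) cg_sym[OF psi_kbin])
    also have "cg \<dots> (psi (h * kbin c t))" by (rule cg_sym[OF psi_mult])
    finally show "g * b1 j \<in> ASp J1 b1" using psi_MS_AS1[OF MS_mult[OF h(1) MS_kbin]] ASp_cg by blast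
  qed
qed

definition J2 :: "(nat \<times> nat \<times> nat \<times> int) set" where
  "J2 = {(a, b, t, c). c = 0 \<or> c = int (min 1 t)}"
definition b2 :: "nat \<times> nat \<times> nat \<times> int \<Rightarrow> falg" where
  "b2 = (\<lambda>(a, b, t, c). Fdiv a * Kbin c t * Ediv b)"

definition TT :: "nat \<Rightarrow> lp \<Rightarrow> nat \<Rightarrow> falg" where
  "TT a f b = Fdiv a * psi f * Ediv b"

lemma TT_AS2: "f \<in> MS \<Longrightarrow> TT a f b \<in> ASp J2 b2"
proof (induction f rule: MS.induct)
  case zero then show ?case by (simp add: ASp_zero TT_def)
next
  case (base c t x)
  have "b2 (a, b, t, c) \<in> ASp J2 b2" using base by (intro ASp_base) (auto simp: J2_def)
  then have "scal x (Fdiv a * Kbin c t * Ediv b) \<in> ASp J2 b2" using base by (intro ASp_smult) (auto simp: b2_def)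
  moreover have "cg (TT a (Lc x * kbin c t) b) (scal x (Fdiv a * Kbin c t * Ediv b))"
    unfolding TT_def psi_Lc_mult scal_mult_left scal_mult_right
    by (intro cg_scal cg_mult_right cg_mult_left psi_kbin)
  ultimately show ?case using ASp_cg by blast
next
  case (add f g) then show ?case by (simp add: TT_def psi_add distrib_left distrib_right ASp_add)
qed

lemma psi_TT: "h \<in> MS \<Longrightarrow> f \<in> MS \<Longrightarrow> psi h * TT a f b \<in> ASp J2 b2"
proof -
  assume h: "h \<in> MS" and f: "f \<in> MS"
  have "psi h * TT a f b = (psi h * Fdiv a) * psi f * Ediv b" by (simp add: TT_def mult.assoc)
  also have "cg \<dots> ((Fdiv a * psi ((sig ^^ a) h)) * psi f * Ediv b)"
    by (intro cg_mult_right psi_Fdiv)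
  also have "\<dots> = Fdiv a * (psi ((sig ^^ a) h) * psi f) * Ediv b" by (simp add: mult.assoc)
  also have "cg \<dots> (Fdiv a * psi ((sig ^^ a) h * f) * Ediv b)"
    by (intro cg_mult_right cg_mult_left cg_sym[OF psi_mult])
  finally show ?thesis using TT_AS2[OF MS_mult[OF MS_sigpow[OF h] f]] ASp_cg unfolding TT_def by blast
qed

lemma Fdiv_TT: "f \<in> MS \<Longrightarrow> Fdiv n * TT a f b \<in> ASp J2 b2"
proof -
  assume f: "f \<in> MS"
  have "Fdiv n * TT a f b = scal (qfact (n + a) / (qfact n * qfact a)) (TT (n + a) f b)"
    by (simp add: TT_def mult.assoc[symmetric] Fdiv_mult scal_mult_left)
  then show ?thesis using f by (simp add: ASp_smult TT_AS2 qfact_ratio_Laurent)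
qed

lemma Ediv_TT: "f \<in> MS \<Longrightarrow> Ediv n * TT a f b \<in> ASp J2 b2"
proof -
  assume f: "f \<in> MS"
  have "Ediv n * TT a f b = (Ediv n * FD (int a)) * psi f * Ediv b" by (simp add: TT_def mult.assoc)
  also have "cg \<dots> (SE n (int a) * psi f * Ediv b)" by (intro cg_mult_right EF_formula)
  also have "SE n (int a) * psi f * Ediv b = (\<Sum>j\<le>n. FD (int a - int j) * psi (kbin (2 * int j - int n - int a) j) * (Ediv (n - j) * psi f) * Ediv b)"
    by (simp add: SE_def sum_distrib_right mult.assoc)
  finally have c1: "cg (Ediv n * TT a f b) (\<Sum>j\<le>n. FD (int a - int j) * psi (kbin (2 * int j - int n - int a) j) * (Ediv (n - j) * psi f) * Ediv b)" .
  have "FD (int a - int j) * psi (kbin (2 * int j - int n - int a) j) * (Ediv (n - j) * psi f) * Ediv b \<in> ASp J2 b2" for j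
  proof (cases "j \<le> a")
    case False then show ?thesis by (simp add: FD_neg ASp_zero)
  next
    case True
    let ?k = "kbin (2 * int j - int n - int a) j"
    let ?g = "?k * (sig ^^ (n - j)) f"
    have "FD (int a - int j) * psi ?k * (Ediv (n - j) * psi f) * Ediv b
       = Fdiv (a - j) * psi ?k * (Ediv (n - j) * psi f) * Ediv b"
    proof -
      have "int a - int j = int (a - j)" using True by simp
      then show ?thesis by (simp only: FD_nat)
    qed
    also have "cg \<dots> (Fdiv (a - j) * psi ?k * (psi ((sig ^^ (n - j)) f) * Ediv (n - j)) * Ediv b)"
      by (intro cg_mult_right cg_mult_left Ediv_psi)
    also have "\<dots> = Fdiv (a - j) * (psi ?k * psi ((sig ^^ (n - j)) f)) * (Ediv (n - j) * Ediv b)"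
      by (simp add: mult.assoc)
    also have "cg \<dots> (Fdiv (a - j) * psi ?g * (Ediv (n - j) * Ediv b))"
      by (intro cg_mult_right cg_mult_left cg_sym[OF psi_mult])
    also have "\<dots> = scal (qfact (n - j + b) / (qfact (n - j) * qfact b)) (TT (a - j) ?g (n - j + b))"
      by (simp add: Ediv_mult TT_def scal_mult_right)
    finally show ?thesis
      using ASp_smult[OF qfact_ratio_Laurent TT_AS2[OF MS_mult[OF MS_kbin MS_sigpow[OF f]]]] ASp_cg by blast
  qed
  then have "(\<Sum>j\<le>n. FD (int a - int j) * psi (kbin (2 * int j - int n - int a) j) * (Ediv (n - j) * psi f) * Ediv b) \<in> ASp J2 b2"
    by (intro ASp_sum)
  then show ?thesis using c1 ASp_cg by blast
qed

lemma b2_TT: "cg (b2 (a, b, t, c)) (TT a (kbin c t) b)"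
  unfolding b2_def TT_def by (simp add: cg_mult_right cg_mult_left cg_sym[OF psi_kbin])

lemma span2: "in_Asubalg UA_gens x \<Longrightarrow> x \<in> ASp J2 b2"
proof (rule in_Asubalg_into)
  show "1 \<in> ASp J2 b2" using TT_AS2[OF MS_1, of 0 0] by (simp add: TT_def)
next
  fix g x assume g: "g \<in> UA_gens" and x: "x \<in> ASp J2 b2"
  have key: "g * TT a f b \<in> ASp J2 b2" if "f \<in> MS" for a f b
  proof -
    from g consider n where "g = Ediv n" | n where "g = Fdiv n" | "g \<in> {K, Ki} \<union> range (Kbin 0)"
      unfolding UA_gens_def by blast
    then show ?thesis
    proof cases
      case 1 then show ?thesis using Ediv_TT[OF that] by simp
    next
      case 2 then show ?thesis using Fdiv_TT[OF that] by simp
    next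
      case 3
      then obtain h where h: "h \<in> MS" "cg g (psi h)" using gens_psi by blast
      then show ?thesis using psi_TT[OF h(1) that] ASp_cg cg_mult_right by blast
    qed
  qed
  show "g * x \<in> ASp J2 b2"
  proof (rule ASp_left_mult[OF _ x])
    fix j assume "j \<in> J2"
    obtain a b t c where j: "j = (a, b, t, c)" by (cases j)
    have "cg (g * b2 j) (g * TT a (kbin c t) b)" unfolding j by (intro cg_mult_left b2_TT)
    then show "g * b2 j \<in> ASp J2 b2" using key[OF MS_kbin] ASp_cg by blast
  qed
qed



section \<open>A representation of the free algebra killing the ideal\<close>

type_synonym vw = "int \<Rightarrow> int \<Rightarrow> int \<Rightarrow> qf"

definition addW :: "vw \<Rightarrow> vw \<Rightarrow> vw" where "addW u v = (\<lambda>a n b. u a n b + v a n b)"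
definition smulW :: "qf \<Rightarrow> vw \<Rightarrow> vw" where "smulW c u = (\<lambda>a n b. c * u a n b)"
definition zeroW :: vw where "zeroW = (\<lambda>a n b. 0)"

definition lin :: "(vw \<Rightarrow> vw) \<Rightarrow> bool" where
  "lin h \<longleftrightarrow> (\<forall>u v. h (addW u v) = addW (h u) (h v)) \<and> (\<forall>c u. h (smulW c u) = smulW c (h u))"

definition opF :: "vw \<Rightarrow> vw" where "opF v = (\<lambda>a n b. v (a - 1) n b)"
definition opK :: "vw \<Rightarrow> vw" where "opK v = (\<lambda>a n b. Q (-2 * a) * v a (n - 1) b)"
definition opKi :: "vw \<Rightarrow> vw" where "opKi v = (\<lambda>a n b. Q (2 * a) * v a (n + 1) b)"
definition opE :: "vw \<Rightarrow> vw" where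
  "opE v = (\<lambda>a n b. Q (-2 * n) * v a n (b - 1)
      + qint (a + 1) / dq * (Q (- a) * v (a + 1) (n - 1) b - Q a * v (a + 1) (n + 1) b))"

fun gop :: "gen \<Rightarrow> vw \<Rightarrow> vw" where
  "gop GE = opE" | "gop GF = opF" | "gop GK = opK" | "gop GKi = opKi"

fun wop :: "word \<Rightarrow> vw \<Rightarrow> vw" where
  "wop (Word gs) = foldr (\<lambda>g h. gop g \<circ> h) gs id"

definition rho :: "falg \<Rightarrow> vw \<Rightarrow> vw" where
  "rho x v = (\<lambda>a n b. \<Sum>w\<in>ks x. lk x w * wop w v a n b)"

lemma lin_gop: "lin (gop g)"
  by (cases g) (simp_all add: lin_def addW_def smulW_def opF_def opK_def opKi_def opE_def algebra_simps)

lemma lin_id: "lin id" by (simp add: lin_def)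

lemma lin_comp: "lin f \<Longrightarrow> lin g \<Longrightarrow> lin (f \<circ> g)" by (simp add: lin_def)
lemma lin_comp': "lin f \<Longrightarrow> lin g \<Longrightarrow> lin (\<lambda>x. f (g x))" by (simp add: lin_def)
lemma lin_id': "lin (\<lambda>x. x)" by (simp add: lin_def)

lemma lin_wop: "lin (wop w)"
proof (cases w)
  case (Word gs)
  show ?thesis unfolding Word wop.simps
  proof (induction gs)
    case Nil then show ?case by (simp add: lin_def)
  next
    case (Cons g gs)
    have eq: "foldr (\<lambda>g h. gop g \<circ> h) (g # gs) id = gop g \<circ> foldr (\<lambda>g h. gop g \<circ> h) gs id" by simp
    show ?case unfolding eq by (rule lin_comp[OF lin_gop Cons.IH])
  qed
qed

lemma lin_zero: "lin h \<Longrightarrow> h zeroW = zeroW"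
proof -
  assume "lin h"
  then have "h (smulW 0 zeroW) = smulW 0 (h zeroW)" by (simp add: lin_def)
  moreover have "smulW 0 u = zeroW" for u by (simp add: smulW_def zeroW_def)
  ultimately show ?thesis by simp
qed

lemma foldr_comp: "foldr (\<lambda>g h. gop g \<circ> h) xs z = foldr (\<lambda>g h. gop g \<circ> h) xs id \<circ> z"
  by (induction xs) auto

lemma wop_plus: "wop (w + w') = wop w \<circ> wop w'"
  by (cases w; cases w') (simp add: foldr_comp[of _ "foldr _ _ id"])

lemma wop_0: "wop 0 = id" by (simp add: zero_word_def)

lemma rho_superset: "finite S \<Longrightarrow> ks x \<subseteq> S \<Longrightarrow> rho x v = (\<lambda>a n b. \<Sum>w\<in>S. lk x w * wop w v a n b)"
  unfolding rho_def by (intro ext sum.mono_neutral_left) (auto simp: in_keys_iff)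

lemma rho_add: "rho (x + y) v = addW (rho x v) (rho y v)"
proof -
  let ?S = "ks x \<union> ks y"
  have "ks (x + y) \<subseteq> ?S" by (rule keys_add)
  then show ?thesis
    by (subst (1 2 3) rho_superset[of ?S]) (auto simp: addW_def lookup_add distrib_right sum.distrib)
qed

lemma rho_zero: "rho 0 v = zeroW" by (simp add: rho_def zeroW_def)

lemma rho_single: "rho (Poly_Mapping.single w c) v = smulW c (wop w v)"
  by (subst rho_superset[of "{w}"]) (auto simp: smulW_def lookup_single when_def)

lemma lin_rho: "lin (rho x)"
  unfolding lin_def rho_def addW_def smulW_def
  using lin_wop unfolding lin_def addW_def smulW_def
  by (auto simp: fun_eq_iff distrib_left sum.distrib sum_distrib_left mult_ac)

lemma rho_mult: "rho (x * y) v = rho x (rho y v)"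
proof (induction x arbitrary: v rule: pm_induct)
  case zero then show ?case by (simp add: rho_zero)
next
  case (single w c x)
  have "rho (Poly_Mapping.single w c * y) v = rho (Poly_Mapping.single w c) (rho y v)" for v
  proof (induction y arbitrary: v rule: pm_induct)
    case zero then show ?case using lin_zero[OF lin_rho] by (simp add: rho_zero)
  next
    case (single w' d y)
    have "rho (Poly_Mapping.single w c * Poly_Mapping.single w' d) v = smulW c (wop w (smulW d (wop w' v)))"
      using lin_wop[of w] by (simp add: mult_single rho_single wop_plus lin_def smulW_def mult_ac)
    then show ?case using single lin_rho[of "Poly_Mapping.single w c"]
      by (simp add: distrib_left rho_add rho_single lin_def)
  qed
  then show ?case using single by (simp add: distrib_right rho_add)
qed

lemma rho_1: "rho 1 v = v"
  using rho_single[of 0 1 v] by (simp add: wop_0 smulW_def)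

lemma rho_scal: "rho (scal c x) v = smulW c (rho x v)"
  by (simp add: scal_def rho_mult rho_single wop_0)

lemma rho_gen: "rho (gen_el g) v = gop g v"
  by (simp add: gen_el_def rho_single smulW_def)

lemma rho_diff: "rho (x - y) v = (\<lambda>a n b. rho x v a n b - rho y v a n b)"
proof -
  have "rho x v = addW (rho (x - y) v) (rho y v)" using rho_add[of "x - y" y v] by simp
  then show ?thesis by (auto simp: addW_def fun_eq_iff)
qed

lemma rho_sum: "rho (sum h S) v = (\<lambda>a n b. \<Sum>i\<in>S. rho (h i) v a n b)"
  by (induction S rule: infinite_finite_induct) (auto simp: rho_zero zeroW_def rho_add addW_def)

lemma qint_succ: "qint (a + 1) = inverse qq * qint a + Q a"
  using qint_add[of a 1] by (simp add: Q_minus)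

lemma qint_dq: "qint a * (qq - inverse qq) = Q a - Q (- a)"
  using dq_nz by (simp add: qint_def2 dq_def)

lemma qid1: "qint (a + 1) * Q (- a) - qint a * Q (- (a - 1)) = Q (- 2 * a)"
proof -
  have e1: "Q (- (a - 1)) = qq * Q (- a)" by (simp add: Q_diff Q_minus field_simps)
  have e2: "Q a * Q (- a) = 1" by (simp add: Q_add[symmetric])
  have e3: "Q (- 2 * a) = Q (- a) * Q (- a)" by (simp add: Q_add[symmetric])
  have "qint (a + 1) * Q (- a) - qint a * Q (- (a - 1)) = 1 - Q (- a) * (qint a * (qq - inverse qq))"
    unfolding qint_succ e1 using e2 by (simp add: algebra_simps)
  also have "\<dots> = Q (- 2 * a)" unfolding qint_dq e3 using e2 by (simp add: algebra_simps)
  finally show ?thesis .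
qed

lemma qid2: "qint (a + 1) * Q a - qint a * Q (a - 1) = Q (2 * a)"
proof -
  have e1: "Q (a - 1) = inverse qq * Q a" by (simp add: Q_diff field_simps)
  have e3: "Q (2 * a) = Q a * Q a" by (simp add: Q_add[symmetric])
  show ?thesis unfolding qint_succ e1 e3 by (simp add: algebra_simps)
qed

lemma inv_Q_cancel [simp]: "inverse (Q x) * (Q x * y) = y" "Q x * (inverse (Q x) * y) = y"
  by (simp_all add: mult.assoc[symmetric])

lemma rels_rho: "r \<in> rels \<Longrightarrow> rho r v = zeroW"
proof -
  assume "r \<in> rels"
  then consider "r = K * Ki - 1" | "r = Ki * K - 1" | "r = K * E * Ki - scal (qq ^ 2) E"
    | "r = K * F * Ki - scal (inverse (qq ^ 2)) F"
    | "r = E * F - F * E - scal (inverse (qq - inverse qq)) (K - Ki)"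
    unfolding rels_def by blast
  then show ?thesis
  proof cases
    case 1 show ?thesis unfolding 1
      by (simp add: rho_diff rho_mult rho_gen rho_1 zeroW_def opK_def opKi_def Q_minus)
  next
    case 2 show ?thesis unfolding 2
      by (simp add: rho_diff rho_mult rho_gen rho_1 zeroW_def opK_def opKi_def Q_minus)
  next
    case 3 show ?thesis unfolding 3
      by (simp add: rho_diff rho_mult rho_gen rho_scal zeroW_def smulW_def opK_def opKi_def opE_def
          Q_add Q_diff Q_minus Q_double field_simps power2_eq_square)
  next
    case 4 show ?thesis unfolding 4
      by (simp add: rho_diff rho_mult rho_gen rho_scal zeroW_def smulW_def opK_def opKi_def opF_def
          Q_add Q_diff Q_minus Q_double field_simps power2_eq_square)
  next
    case 5
    show ?thesis
    proof (rule ext, rule ext, rule ext)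
      fix a n b
      have "rho r v a n b = (v a (n - 1) b * (qint (a + 1) * Q (- a) - qint a * Q (- (a - 1)))
          - v a (n + 1) b * (qint (a + 1) * Q a - qint a * Q (a - 1))
          - (Q (- 2 * a) * v a (n - 1) b - Q (2 * a) * v a (n + 1) b)) / dq"
        unfolding 5 dq_def[symmetric]
        by (simp add: rho_diff rho_add addW_def rho_mult rho_gen rho_scal smulW_def opK_def opKi_def opF_def opE_def
            field_simps)
      also have "\<dots> = 0" unfolding qid1 qid2 by (simp add: algebra_simps)
      finally show "rho r v a n b = zeroW a n b" by (simp add: zeroW_def)
    qed
  qed
qed

lemma ri_rho: "x \<in> relideal \<Longrightarrow> rho x v = zeroW"
proof (induction x arbitrary: v rule: relideal.induct)
  case zero then show ?case by (simp add: rho_zero)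
next
  case (gen r a b)
  then show ?case by (simp add: rho_mult rels_rho lin_zero[OF lin_rho])
next
  case (add x y) then show ?case by (simp add: rho_add addW_def zeroW_def)
qed

lemma cg_rho: "cg x y \<Longrightarrow> rho x v = rho y v"
  unfolding cg_def using ri_rho[of "x - y" v] by (auto simp: rho_diff zeroW_def fun_eq_iff)

definition vec :: "int \<Rightarrow> lp \<Rightarrow> int \<Rightarrow> vw" where
  "vec a' f b' = (\<lambda>a n b. if a = a' \<and> b = b' then lk f n else 0)"

lemma opE_vec0: "opE (vec 0 f b') = vec 0 (sig f) (b' + 1)"
  by (auto simp: opE_def vec_def lk_sig fun_eq_iff)

lemma opK_vec0: "opK (vec 0 f b') = vec 0 (LX * f) b'"
  by (auto simp: opK_def vec_def fun_eq_iff mult.commute[of LX] lk_mult_single)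

lemma opKi_vec0: "opKi (vec 0 f b') = vec 0 (LXi * f) b'"
  by (auto simp: opKi_def vec_def fun_eq_iff mult.commute[of LXi] lk_mult_single)

lemma opF_vec: "opF (vec a' f b') = vec (a' + 1) f b'"
  by (auto simp: opF_def vec_def fun_eq_iff)

lemma rho_Epow: "rho (E ^ m) (vec 0 f b') = vec 0 ((sig ^^ m) f) (b' + int m)"
proof (induction m)
  case 0 then show ?case by (simp add: rho_1)
next
  case (Suc m)
  then show ?case by (simp add: rho_mult rho_gen opE_vec0 ac_simps)
qed

lemma rho_Fpow: "rho (F ^ m) (vec a' f b') = vec (a' + int m) f b'"
proof (induction m)
  case 0 then show ?case by (simp add: rho_1)
next
  case (Suc m)
  then show ?case by (simp add: rho_mult rho_gen opF_vec ac_simps)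
qed

lemma LX_pow: "LX ^ k = Poly_Mapping.single (int k) 1"
  by (induction k) (simp_all add: mult_single add.commute)

lemma LXi_pow: "LXi ^ k = Poly_Mapping.single (- int k) 1"
  by (induction k) (simp_all add: mult_single add.commute)

lemma rho_Kpow: "rho (K ^ k) (vec 0 f b') = vec 0 (LX ^ k * f) b'"
  by (induction k) (simp_all add: rho_1 rho_mult rho_gen opK_vec0 mult.assoc)

lemma rho_Kipow: "rho (Ki ^ k) (vec 0 f b') = vec 0 (LXi ^ k * f) b'"
  by (induction k) (simp_all add: rho_1 rho_mult rho_gen opKi_vec0 mult.assoc)

lemma rho_Kp: "rho (Kp m) (vec 0 f b') = vec 0 (Poly_Mapping.single m 1 * f) b'"
proof (cases "m \<ge> 0")
  case True
  then obtain k where "m = int k" by (metis nonneg_eq_int)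
  then show ?thesis by (simp add: Kp_nat rho_Kpow LX_pow)
next
  case False
  then obtain k where "m = - int k" by (intro that[of "nat (- m)"]) simp
  then show ?thesis by (simp add: Kp_neg rho_Kipow LXi_pow)
qed

lemma Lc_single: "Lc c * Poly_Mapping.single m 1 = Poly_Mapping.single m c"
  by (simp add: Lc_def mult_single)

lemma rho_psi_vec0: "rho (psi g) (vec 0 f b') = vec 0 (g * f) b'"
proof -
  have "rho (psi g) (vec 0 f b') = (\<lambda>a n b. \<Sum>m\<in>ks g. lk g m * vec 0 (Poly_Mapping.single m 1 * f) b' a n b)"
    by (simp add: psi_def rho_sum rho_scal smulW_def rho_Kp)
  also have "\<dots> = vec 0 (g * f) b'"
  proof (rule ext, rule ext, rule ext)
    fix a n b
    have "(\<Sum>m\<in>ks g. lk g m * lk (Poly_Mapping.single m 1 * f) n) = lk ((\<Sum>m\<in>ks g. Poly_Mapping.single m (lk g m)) * f) n"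
      by (simp add: sum_distrib_right lookup_sum lk_Lc_mult[symmetric] mult.assoc[symmetric] Lc_single)
    then show "(\<Sum>m\<in>ks g. lk g m * vec 0 (Poly_Mapping.single m 1 * f) b' a n b) = vec 0 (g * f) b' a n b"
      by (cases "a = 0 \<and> b = b'") (auto simp: vec_def pm_sum_singles[of g, symmetric])
  qed
  finally show ?thesis .
qed

lemma sigpow_1: "(sig ^^ m) 1 = 1" by (induction m) auto

lemma rho_smulW: "rho x (smulW c v) = smulW c (rho x v)"
  using lin_rho[of x] by (simp add: lin_def)

lemma rho_basis: "rho (Fdiv a * psi g * Ediv b) (vec 0 1 0) = smulW (inverse (qfact a) * inverse (qfact b)) (vec (int a) g (int b))"
proof -
  have "rho (Ediv b) (vec 0 1 0) = smulW (inverse (qfact b)) (vec 0 1 (int b))"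
    by (simp add: Ediv_def rho_scal rho_Epow sigpow_1)
  then have B: "rho (psi g * Ediv b) (vec 0 1 0) = smulW (inverse (qfact b)) (vec 0 g (int b))"
    by (simp only: rho_mult rho_smulW rho_psi_vec0 mult_1_right)
  have "rho (Fdiv a * psi g * Ediv b) (vec 0 1 0) = smulW (inverse (qfact a)) (smulW (inverse (qfact b)) (rho (F ^ a) (vec 0 g (int b))))"
  proof -
    have "rho (Fdiv a * psi g * Ediv b) (vec 0 1 0) = rho (Fdiv a) (rho (psi g * Ediv b) (vec 0 1 0))"
      by (simp only: mult.assoc[of "Fdiv a"] rho_mult[of "Fdiv a" "psi g * Ediv b"])
    then show ?thesis by (simp only: B Fdiv_def rho_scal rho_smulW) (simp add: smulW_def mult_ac)
  qed
  also have "\<dots> = smulW (inverse (qfact a) * inverse (qfact b)) (vec (int a) g (int b))"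
    by (simp add: rho_Fpow smulW_def mult.assoc)
  finally show ?thesis .
qed



section \<open>Linear independence of the kbin in Laurent polynomials\<close>

definition Pk :: "int \<Rightarrow> nat \<Rightarrow> lp" where "Pk c t = (\<Prod>i<t. kbr (c - int i))"

lemma lk_mult_kbr: "lk (f * kbr x) n = lk f (n - 1) * (Q x / dq) - lk f (n + 1) * (Q (- x) / dq)"
  by (simp add: kbr_def right_diff_distrib lookup_minus lk_mult_single)

lemma lk_one: "lk (1 :: lp) n = (if n = 0 then 1 else 0)"
  using lk_Lc[of 1 n] by simp

lemma Pk_props:
  "(\<forall>n. int t < \<bar>n\<bar> \<longrightarrow> lk (Pk c t) n = 0) \<and>
   lk (Pk c t) (int t) = (\<Prod>i<t. Q (c - int i) / dq) \<and>
   lk (Pk c t) (- int t) = (\<Prod>i<t. - (Q (- (c - int i)) / dq))"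
proof (induction t)
  case 0 then show ?case by (simp add: Pk_def lk_one)
next
  case (Suc t)
  have P: "Pk c (Suc t) = Pk c t * kbr (c - int t)" by (simp add: Pk_def)
  have v: "lk (Pk c t) m = 0" if "int t < \<bar>m\<bar>" for m using Suc.IH that by blast
  have A: "\<forall>n. int (Suc t) < \<bar>n\<bar> \<longrightarrow> lk (Pk c (Suc t)) n = 0"
  proof (intro allI impI)
    fix n assume "int (Suc t) < \<bar>n\<bar>"
    then have "int t < \<bar>n - 1\<bar>" "int t < \<bar>n + 1\<bar>" by auto
    then show "lk (Pk c (Suc t)) n = 0" by (simp add: P lk_mult_kbr v)
  qed
  have B: "lk (Pk c (Suc t)) (int (Suc t)) = (\<Prod>i<Suc t. Q (c - int i) / dq)"
  proof -
    have "int t < \<bar>int (Suc t) + 1\<bar>" by simp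
    then have "lk (Pk c t) (int (Suc t) + 1) = 0" by (rule v)
    then show ?thesis using Suc.IH by (simp add: P lk_mult_kbr)
  qed
  have C: "lk (Pk c (Suc t)) (- int (Suc t)) = (\<Prod>i<Suc t. - (Q (- (c - int i)) / dq))"
  proof -
    have "int t < \<bar>- int (Suc t) - 1\<bar>" by simp
    then have "lk (Pk c t) (- int (Suc t) - 1) = 0" by (rule v)
    moreover have "- int (Suc t) + 1 = - int t" by simp
    ultimately show ?thesis using Suc.IH by (simp add: P lk_mult_kbr)
  qed
  show ?case using A B C by blast
qed

lemma lk_kbin: "lk (kbin c t) n = inverse (qfact t) * lk (Pk c t) n"
  by (simp add: kbin_def Pk_def)

lemma kbin_vanish: "int t < \<bar>n\<bar> \<Longrightarrow> lk (kbin c t) n = 0"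
  using Pk_props[of t c] by (simp add: lk_kbin)

lemma top_ratio: "lk (kbin 1 t) (int t) = Q (int t) * lk (kbin 0 t) (int t)"
proof -
  have "(\<Prod>i<t. Q (1 - int i) / dq) = (\<Prod>i<t. qq * (Q (0 - int i) / dq))"
    by (rule prod.cong) (simp_all add: Q_diff Q_minus field_simps)
  also have "\<dots> = (\<Prod>i<t. qq) * (\<Prod>i<t. Q (0 - int i) / dq)" by (rule prod.distrib)
  also have "(\<Prod>i<t. qq) = Q (int t)" by simp
  finally show ?thesis using Pk_props[of t 1] Pk_props[of t 0] by (simp add: lk_kbin)
qed

lemma bot_ratio: "lk (kbin 1 t) (- int t) = Q (- int t) * lk (kbin 0 t) (- int t)"
proof -
  have "(\<Prod>i<t. - (Q (- (1 - int i)) / dq)) = (\<Prod>i<t. inverse qq * (- (Q (- (0 - int i)) / dq)))"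
    by (rule prod.cong) (simp_all add: Q_diff Q_minus field_simps)
  also have "\<dots> = (\<Prod>i<t. inverse qq) * (\<Prod>i<t. - (Q (- (0 - int i)) / dq))" by (rule prod.distrib)
  also have "(\<Prod>i<t. inverse qq) = Q (- int t)" by (simp add: Q_minus power_inverse)
  finally show ?thesis using Pk_props[of t 1] Pk_props[of t 0] by (simp add: lk_kbin)
qed

lemma top_nz: "lk (kbin 0 t) (int t) \<noteq> 0"
  using Pk_props[of t 0] by (simp add: lk_kbin)

lemma bot_nz: "lk (kbin 0 t) (- int t) \<noteq> 0"
  using Pk_props[of t 0] by (simp add: lk_kbin)

lemma Lind_aux:
  "\<forall>S d. finite S \<longrightarrow> S \<subseteq> J1 \<longrightarrow> (\<forall>j\<in>S. snd j \<le> T) \<longrightarrow>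
     (\<forall>n. (\<Sum>j\<in>S. d j * lk (kbin (fst j) (snd j)) n) = 0) \<longrightarrow> (\<forall>j\<in>S. d j = 0)"
proof (induction T)
  case 0
  show ?case
  proof (intro allI impI ballI)
    fix S d j
    assume S: "finite S" "S \<subseteq> J1" "\<forall>j\<in>S. snd j \<le> 0" and z: "\<forall>n. (\<Sum>j\<in>S. d j * lk (kbin (fst j) (snd j)) n) = 0"
      and j: "j \<in> S"
    have "S \<subseteq> {(0, 0)}"
    proof
      fix j assume "j \<in> S"
      then have "j \<in> J1" "snd j = 0" using S by auto
      then show "j \<in> {(0, 0)}" by (cases j) (auto simp: J1_def)
    qed
    then have "S = {(0, 0)}" using j by auto
    then show "d j = 0" using z[rule_format, of 0] j by (simp add: lk_one)
  qed
next
  case (Suc T)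
  show ?case
  proof (intro allI impI ballI)
    fix S d j
    assume S: "finite S" "S \<subseteq> J1" "\<forall>j\<in>S. snd j \<le> Suc T" and z: "\<forall>n. (\<Sum>j\<in>S. d j * lk (kbin (fst j) (snd j)) n) = 0"
      and j: "j \<in> S"
    define T' where "T' = Suc T"
    define Sl where "Sl = {j\<in>S. snd j \<le> T}"
    define Sh where "Sh = {j\<in>S. snd j = T'}"
    define H where "H = {(0::int, T'), (1, T')}"
    define d' where "d' j = (if j \<in> S then d j else 0)" for j
    let ?co = "\<lambda>j n. lk (kbin (fst j) (snd j)) n"
    have fin: "finite Sl" "finite Sh" using S by (auto simp: Sl_def Sh_def)
    have SU: "S = Sl \<union> Sh" "Sl \<inter> Sh = {}" using S by (auto simp: Sl_def Sh_def T'_def)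
    have ShH: "Sh \<subseteq> H" using S by (auto simp: Sh_def H_def J1_def T'_def)
    have hi: "(\<Sum>j\<in>Sh. d j * ?co j n) = d' (0, T') * ?co (0, T') n + d' (1, T') * ?co (1, T') n" for n
    proof -
      have "(\<Sum>j\<in>Sh. d j * ?co j n) = (\<Sum>j\<in>Sh. d' j * ?co j n)"
        by (rule sum.cong) (auto simp: d'_def Sh_def)
      also have "\<dots> = (\<Sum>j\<in>H. d' j * ?co j n)"
        by (rule sum.mono_neutral_left) (use ShH in \<open>auto simp: H_def d'_def Sh_def\<close>)
      also have "\<dots> = d' (0, T') * ?co (0, T') n + d' (1, T') * ?co (1, T') n"
        by (simp add: H_def)
      finally show ?thesis .
    qed
    have split: "(\<Sum>j\<in>S. d j * ?co j n) = (\<Sum>j\<in>Sl. d j * ?co j n) + (\<Sum>j\<in>Sh. d j * ?co j n)" for n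
      unfolding SU(1) using fin SU(2) by (rule sum.union_disjoint)
    have low0: "(\<Sum>j\<in>Sl. d j * ?co j n) = 0" if "int T < \<bar>n\<bar>" for n
      by (rule sum.neutral) (use that in \<open>auto simp: Sl_def intro!: kbin_vanish\<close>)
    define x where "x = d' (0, T')"
    define y where "y = d' (1, T')"
    define A where "A = lk (kbin 0 T') (int T')"
    define B where "B = lk (kbin 0 T') (- int T')"
    have lt1: "int T < \<bar>int T'\<bar>" "int T < \<bar>- int T'\<bar>" by (simp_all add: T'_def)
    have eq1: "x * A + y * (Q (int T') * A) = 0"
      using z[rule_format, of "int T'"] split[of "int T'"] hi[of "int T'"] low0[OF lt1(1)] top_ratio[of T']
      by (simp add: x_def y_def A_def)
    have eq2: "x * B + y * (Q (- int T') * B) = 0"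
      using z[rule_format, of "- int T'"] split[of "- int T'"] hi[of "- int T'"] low0[OF lt1(2)] bot_ratio[of T']
      by (simp add: x_def y_def B_def)
    have Anz: "A \<noteq> 0" unfolding A_def by (rule top_nz)
    have Bnz: "B \<noteq> 0" unfolding B_def by (rule bot_nz)
    have e1: "x + y * Q (int T') = 0" using eq1 Anz
      by (metis (no_types, lifting) distrib_right mult.assoc mult.commute mult_eq_0_iff)
    have e2: "x + y * Q (- int T') = 0" using eq2 Bnz
      by (metis (no_types, lifting) distrib_right mult.assoc mult.commute mult_eq_0_iff)
    have yy: "y * Q (int T') = y * Q (- int T')" using e1 e2 by (metis add_left_cancel)
    have "Q (int T') \<noteq> Q (- int T')" unfolding Q_inj by (simp add: T'_def)
    then have y0: "y = 0" using yy by simp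
    then have x0: "x = 0" using e1 by simp
    have "\<forall>n. (\<Sum>j\<in>Sl. d j * ?co j n) = 0"
      using z split hi x0 y0 by (simp add: x_def y_def)
    moreover have "Sl \<subseteq> J1" "\<forall>j\<in>Sl. snd j \<le> T" using S by (auto simp: Sl_def)
    ultimately have lowz: "\<forall>j\<in>Sl. d j = 0" using Suc.IH fin(1) by blast
    show "d j = 0"
    proof (cases "j \<in> Sl")
      case True then show ?thesis using lowz by blast
    next
      case False
      then have "j \<in> Sh" using j SU by blast
      then have "j \<in> H" using ShH by blast
      then have "j = (0, T') \<or> j = (1, T')" by (auto simp: H_def)
      then show ?thesis using x0 y0 j by (auto simp: x_def y_def d'_def)
    qed
  qed
qed

lemma Lind:
  assumes "finite S" "S \<subseteq> J1" "\<And>n. (\<Sum>j\<in>S. d j * lk (kbin (fst j) (snd j)) n) = 0" "j \<in> S"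
  shows "d j = 0"
proof -
  obtain T where "\<forall>j\<in>S. snd j \<le> T"
    using assms(1) finite_nat_set_iff_bounded_le[of "snd ` S"] by auto
  then show ?thesis using Lind_aux[of T] assms by blast
qed



lemma rho_eval:
  assumes fin: "finite S" and rel: "(\<Sum>j\<in>S. scal (c j) (X j)) \<in> relideal"
    and cgX: "\<And>j. j \<in> S \<Longrightarrow> cg (X j) (Fdiv (A j) * psi (G j) * Ediv (B j))"
  shows "(\<Sum>j\<in>S. c j * (inverse (qfact (A j)) * inverse (qfact (B j))) * (if A j = a \<and> B j = b then lk (G j) n else 0)) = 0"
proof -
  have "rho (\<Sum>j\<in>S. scal (c j) (X j)) (vec 0 1 0) = zeroW" by (rule ri_rho[OF rel])
  then have "rho (\<Sum>j\<in>S. scal (c j) (X j)) (vec 0 1 0) (int a) n (int b) = 0" by (simp add: zeroW_def)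
  moreover have "rho (\<Sum>j\<in>S. scal (c j) (X j)) (vec 0 1 0) (int a) n (int b)
     = (\<Sum>j\<in>S. c j * (inverse (qfact (A j)) * inverse (qfact (B j))) * (if A j = a \<and> B j = b then lk (G j) n else 0))"
    unfolding rho_sum
  proof (rule sum.cong[OF refl])
    fix j assume j: "j \<in> S"
    have "rho (X j) (vec 0 1 0) = rho (Fdiv (A j) * psi (G j) * Ediv (B j)) (vec 0 1 0)"
      by (rule cg_rho[OF cgX[OF j]])
    also have "\<dots> = smulW (inverse (qfact (A j)) * inverse (qfact (B j))) (vec (int (A j)) (G j) (int (B j)))"
      by (rule rho_basis)
    finally have r: "rho (X j) (vec 0 1 0) = smulW (inverse (qfact (A j)) * inverse (qfact (B j))) (vec (int (A j)) (G j) (int (B j)))" .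
    show "rho (scal (c j) (X j)) (vec 0 1 0) (int a) n (int b)
      = c j * (inverse (qfact (A j)) * inverse (qfact (B j))) * (if A j = a \<and> B j = b then lk (G j) n else 0)"
      unfolding rho_scal r by (auto simp: smulW_def vec_def)
  qed
  ultimately show ?thesis by simp
qed

lemma indep1:
  assumes "finite S" "S \<subseteq> J1" "\<forall>j\<in>S. c j \<in> Laurent" "(\<Sum>j\<in>S. scal (c j) (b1 j)) \<in> relideal"
  shows "\<forall>j\<in>S. c j = 0"
proof
  fix j assume j: "j \<in> S"
  have "(\<Sum>j\<in>S. c j * (inverse (qfact 0) * inverse (qfact 0)) * (if (0::nat) = 0 \<and> (0::nat) = 0 then lk (kbin (fst j) (snd j)) n else 0)) = 0" for n
  proof (rule rho_eval[OF assms(1) assms(4)])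
    fix j assume "j \<in> S"
    obtain c t where "j = (c, t)" by (cases j)
    then show "cg (b1 j) (Fdiv 0 * psi (kbin (fst j) (snd j)) * Ediv 0)"
      by (simp add: b1_def cg_sym[OF psi_kbin])
  qed
  then have "\<And>n. (\<Sum>j\<in>S. c j * lk (kbin (fst j) (snd j)) n) = 0" by simp
  then show "c j = 0" using Lind[OF assms(1,2)] j by blast
qed

lemma indep2:
  assumes fin: "finite S" and sub: "S \<subseteq> J2" "\<forall>j\<in>S. c j \<in> Laurent" and rel: "(\<Sum>j\<in>S. scal (c j) (b2 j)) \<in> relideal"
  shows "\<forall>j\<in>S. c j = 0"
proof
  fix j0 assume j0: "j0 \<in> S"
  obtain a b t0 c0 where j0e: "j0 = (a, b, t0, c0)" by (cases j0)
  define A where "A j = fst j" for j :: "nat \<times> nat \<times> nat \<times> int"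
  define B where "B j = fst (snd j)" for j :: "nat \<times> nat \<times> nat \<times> int"
  define G where "G j = kbin (snd (snd (snd j))) (fst (snd (snd j)))" for j :: "nat \<times> nat \<times> nat \<times> int"
  define emb where "emb p = (a, b, snd p, fst p)" for p :: "int \<times> nat"
  define S' where "S' = {p. emb p \<in> S}"
  have ev: "(\<Sum>j\<in>S. c j * (inverse (qfact (A j)) * inverse (qfact (B j))) * (if A j = a \<and> B j = b then lk (G j) n else 0)) = 0" for n
  proof (rule rho_eval[OF fin rel])
    fix j assume "j \<in> S"
    obtain a' b' t' c' where "j = (a', b', t', c')" by (cases j)
    then show "cg (b2 j) (Fdiv (A j) * psi (G j) * Ediv (B j))"
      using b2_TT[of a' b' t' c'] by (simp add: A_def B_def G_def TT_def)
  qed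
  have inj: "inj_on emb S'" by (auto simp: inj_on_def emb_def)
  have img: "{j \<in> S. A j = a \<and> B j = b} = emb ` S'"
    by (auto simp: S'_def emb_def A_def B_def image_iff)
  have finS': "finite S'"
  proof -
    have "S' \<subseteq> (\<lambda>j. (snd (snd (snd j)), fst (snd (snd j)))) ` S"
    proof
      fix p assume "p \<in> S'"
      then show "p \<in> (\<lambda>j. (snd (snd (snd j)), fst (snd (snd j)))) ` S"
        by (intro image_eqI[of _ _ "emb p"]) (auto simp: S'_def emb_def)
    qed
    then show ?thesis by (rule finite_surj[OF fin])
  qed
  have subS': "S' \<subseteq> J1"
  proof
    fix p assume "p \<in> S'"
    then have "emb p \<in> J2" using sub(1) by (auto simp: S'_def)
    then show "p \<in> J1" by (cases p) (auto simp: J1_def J2_def emb_def)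
  qed
  have z: "(\<Sum>p\<in>S'. (c (emb p) * (inverse (qfact a) * inverse (qfact b))) * lk (kbin (fst p) (snd p)) n) = 0" for n
  proof -
    have "(\<Sum>j\<in>S. c j * (inverse (qfact (A j)) * inverse (qfact (B j))) * (if A j = a \<and> B j = b then lk (G j) n else 0))
        = (\<Sum>j\<in>{j \<in> S. A j = a \<and> B j = b}. c j * (inverse (qfact (A j)) * inverse (qfact (B j))) * lk (G j) n)"
    proof -
      have "(\<Sum>j\<in>S. c j * (inverse (qfact (A j)) * inverse (qfact (B j))) * (if A j = a \<and> B j = b then lk (G j) n else 0))
          = (\<Sum>j\<in>S. if A j = a \<and> B j = b then c j * (inverse (qfact (A j)) * inverse (qfact (B j))) * lk (G j) n else 0)"
        by (rule sum.cong) auto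
      also have "\<dots> = (\<Sum>j\<in>{j \<in> S. A j = a \<and> B j = b}. c j * (inverse (qfact (A j)) * inverse (qfact (B j))) * lk (G j) n)"
        by (rule sum.inter_filter[symmetric, OF fin])
      finally show ?thesis .
    qed
    also have "\<dots> = (\<Sum>p\<in>S'. c (emb p) * (inverse (qfact (A (emb p))) * inverse (qfact (B (emb p)))) * lk (G (emb p)) n)"
      unfolding img by (simp add: sum.reindex[OF inj])
    also have "\<dots> = (\<Sum>p\<in>S'. (c (emb p) * (inverse (qfact a) * inverse (qfact b))) * lk (kbin (fst p) (snd p)) n)"
      by (simp add: A_def B_def G_def emb_def)
    finally show ?thesis using ev[of n] by simp
  qed
  have "(c0, t0) \<in> S'" using j0 by (simp add: S'_def emb_def j0e)
  then have "c (emb (c0, t0)) * (inverse (qfact a) * inverse (qfact b)) = 0"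
    using Lind[OF finS' subS' z] by blast
  then show "c j0 = 0" by (simp add: emb_def j0e)
qed

lemma Kbin_in:
  assumes "Ki \<in> G" "\<And>s. Kbin 0 s \<in> G" "(c, t) \<in> J1"
  shows "\<exists>y\<in>Asubalg G. cg (Kbin c t) y"
proof (cases "c = 0")
  case True then show ?thesis using assms(2) by (intro bexI[of _ "Kbin 0 t"]) (auto intro: Asubalg.gen)
next
  case False
  then obtain s where cs: "c = 1" "t = Suc s" using assms(3) by (auto simp: J1_def dest: Suc_le_D)
  define y where "y = scal (Q (int s + 1)) (Kbin 0 (Suc s)) + scal (Q (int s)) (Ki * Kbin 0 s)"
  have "y \<in> Asubalg G" unfolding y_def using assms(1,2)
    by (intro Asubalg.add Asubalg.smult Asubalg.mult Asubalg.gen Laurent_Q)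
  moreover have "cg (Kbin c t) y"
  proof -
    have "cg (Kbin c t) (psi (kbin 1 (Suc s)))" unfolding cs by (rule cg_sym[OF psi_kbin])
    also have "kbin 1 (Suc s) = Lc (Q (int s + 1)) * kbin 0 (Suc s) + Lc (Q (int s)) * (LXi * kbin 0 s)"
      using kbin_shift[of 0 s] by simp
    also have "psi \<dots> = scal (Q (int s + 1)) (psi (kbin 0 (Suc s))) + scal (Q (int s)) (psi (LXi * kbin 0 s))"
      by (simp add: psi_add psi_Lc_mult)
    also have "cg \<dots> y"
    proof -
      have "cg (psi (LXi * kbin 0 s)) (psi LXi * psi (kbin 0 s))" by (rule psi_mult)
      also have "cg \<dots> (Ki * Kbin 0 s)" unfolding psi_LXi by (intro cg_mult_left psi_kbin)
      finally have c2: "cg (psi (LXi * kbin 0 s)) (Ki * Kbin 0 s)" .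
      show ?thesis unfolding y_def by (intro cg_add cg_scal c2 psi_kbin)
    qed
    finally show ?thesis .
  qed
  ultimately show ?thesis by blast
qed

theorem proposition5p3:
  shows "is_A_basis (in_Asubalg U0A_gens)
           {(c, t). c = 0 \<or> (c = 1 \<and> t \<ge> 1)} (\<lambda>(c, t). Kbin c t)
       \<and> is_A_basis (in_Asubalg UA_gens)
           {(a, b, t, c). c = 0 \<or> c = int (min 1 t)}
           (\<lambda>(a, b, t, c). Fdiv a * Kbin c t * Ediv b)"
proof
  have J1e: "{(c, t). c = 0 \<or> (c = 1 \<and> t \<ge> 1)} = J1" by (simp add: J1_def)
  have b1e: "(\<lambda>(c, t). Kbin c t) = b1" by (simp add: b1_def)
  show "is_A_basis (in_Asubalg U0A_gens) {(c, t). c = 0 \<or> (c = 1 \<and> t \<ge> 1)} (\<lambda>(c, t). Kbin c t)"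
    unfolding J1e b1e is_A_basis_def
  proof (intro conjI allI impI ballI)
    fix j assume j: "j \<in> J1"
    obtain c t where jj: "j = (c, t)" by (cases j)
    have "\<exists>y\<in>Asubalg U0A_gens. cg (Kbin c t) y"
      using j jj by (intro Kbin_in) (auto simp: U0A_gens_def)
    then show "in_Asubalg U0A_gens (b1 j)" by (simp add: in_Asubalg_def cg_def b1_def jj)
  next
    fix S c j assume h: "finite S" "S \<subseteq> J1" "\<forall>j\<in>S. c j \<in> Laurent" "(\<Sum>j\<in>S. scal (c j) (b1 j)) \<in> relideal"
      and j: "j \<in> S"
    show "c j = 0" using indep1[OF h] j by blast
  next
    fix x assume "in_Asubalg U0A_gens x"
    then have "x \<in> ASp J1 b1" by (rule span1)
    then show "\<exists>S c. finite S \<and> S \<subseteq> J1 \<and> (\<forall>j\<in>S. c j \<in> Laurent) \<and> x - (\<Sum>j\<in>S. scal (c j) (b1 j)) \<in> relideal"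
      by (simp add: ASp_def)
  qed
next
  have J2e: "{(a, b, t, c). c = 0 \<or> c = int (min 1 t)} = J2" by (simp add: J2_def)
  have b2e: "(\<lambda>(a, b, t, c). Fdiv a * Kbin c t * Ediv b) = b2" by (simp add: b2_def)
  show "is_A_basis (in_Asubalg UA_gens) {(a, b, t, c). c = 0 \<or> c = int (min 1 t)} (\<lambda>(a, b, t, c). Fdiv a * Kbin c t * Ediv b)"
    unfolding J2e b2e is_A_basis_def
  proof (intro conjI allI impI ballI)
    fix j assume j: "j \<in> J2"
    obtain a b t c where jj: "j = (a, b, t, c)" by (cases j)
    have "(c, t) \<in> J1" using j jj by (auto simp: J1_def J2_def)
    then obtain y where y: "y \<in> Asubalg UA_gens" "cg (Kbin c t) y"
      using Kbin_in[of UA_gens c t] by (auto simp: UA_gens_def)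
    have g: "Fdiv a \<in> UA_gens" "Ediv b \<in> UA_gens" by (auto simp: UA_gens_def)
    have "Fdiv a * y * Ediv b \<in> Asubalg UA_gens"
      by (rule Asubalg.mult[OF Asubalg.mult[OF Asubalg.gen[OF g(1)] y(1)] Asubalg.gen[OF g(2)]])
    moreover have "cg (b2 j) (Fdiv a * y * Ediv b)"
      unfolding jj b2_def using y(2) by (simp add: cg_mult_left cg_mult_right)
    ultimately show "in_Asubalg UA_gens (b2 j)" unfolding in_Asubalg_def cg_def by blast
  next
    fix S c j assume h: "finite S" "S \<subseteq> J2" "\<forall>j\<in>S. c j \<in> Laurent" "(\<Sum>j\<in>S. scal (c j) (b2 j)) \<in> relideal"
      and j: "j \<in> S"
    show "c j = 0" using indep2[OF h] j by blast
  next
    fix x assume "in_Asubalg UA_gens x"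
    then have "x \<in> ASp J2 b2" by (rule span2)
    then show "\<exists>S c. finite S \<and> S \<subseteq> J2 \<and> (\<forall>j\<in>S. c j \<in> Laurent) \<and> x - (\<Sum>j\<in>S. scal (c j) (b2 j)) \<in> relideal"
      by (simp add: ASp_def)
  qed
qed


end
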